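(* Let $\sigma>0$ and $h:[0,\sigma)\to\mathbb{R}^+$ be continuous, strictly increasing, with $\lim_{s\to\sigma^-}h(s)=+\infty$, and suppose there exists $\gamma\in[1,2)$ with $\lim_{s\to\sigma^-}(\sigma-s)^\gamma h(s)=C>0$. Let $H(s)=\int_0^s h$, $\psi(s)=\int_0^s e^{-H(t)}dt$, $L=\psi(\sigma)$, and $g(s)=e^{-H(\psi^{-1}(s))}$ on $[0,L]$ ($g(L)=0$). Let $R>0$ and $\Omega=B_R(0)\subset\mathbb{R}^N$. Then for $\lambda$ large enough there exists a subsolution $\underline v$ of $-\Delta v=\lambda g(v)$ in $B_R(0)$, $v=0$ on $\partial B_R(0)$ — namely $\underline v\in H^1_0(B_R(0))$ with $0\le\underline v\le L$ and $\int_{B_R}\nabla\underline v\cdot\nabla\varphi\le\lambda\int_{B_R}g(\underline v)\varphi$ for all nonnegative $\varphi\in H^1_0(B_R(0))$ — such that $\mathrm{meas}(\{\underline v=L\})>0$. *)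

theory Defs
  imports "HOL-Analysis.Analysis"
begin

definition Hfun :: "(real \<Rightarrow> real) \<Rightarrow> real \<Rightarrow> real" where
  "Hfun h s = integral {0..s} h"

definition psi :: "(real \<Rightarrow> real) \<Rightarrow> real \<Rightarrow> real" where
  "psi h s = integral {0..s} (\<lambda>t. exp (- Hfun h t))"

definition gfun :: "(real \<Rightarrow> real) \<Rightarrow> real \<Rightarrow> real \<Rightarrow> real" where
  "gfun h \<sigma> s = (if s < psi h \<sigma>
     then exp (- Hfun h (the_inv_into {0..<\<sigma>} (psi h) s)) else 0)"

definition test_fun :: "'a::euclidean_space set \<Rightarrow> ('a \<Rightarrow> real) \<Rightarrow> ('a \<Rightarrow> 'a) \<Rightarrow> bool" where
  "test_fun \<Omega> \<phi> D\<phi> \<longleftrightarrow>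
     (\<forall>x. (\<phi> has_derivative (\<lambda>y. D\<phi> x \<bullet> y)) (at x)) \<and> continuous_on UNIV D\<phi> \<and>
     compact (closure {x. \<phi> x \<noteq> 0}) \<and> closure {x. \<phi> x \<noteq> 0} \<subseteq> \<Omega>"

definition L2_on :: "'a::euclidean_space set \<Rightarrow> ('a \<Rightarrow> real) \<Rightarrow> bool" where
  "L2_on \<Omega> u \<longleftrightarrow> set_borel_measurable lebesgue \<Omega> u \<and>
     set_integrable lebesgue \<Omega> (\<lambda>x. (u x)\<^sup>2)"

definition L2v_on :: "'a::euclidean_space set \<Rightarrow> ('a \<Rightarrow> 'a) \<Rightarrow> bool" where
  "L2v_on \<Omega> G \<longleftrightarrow> set_borel_measurable lebesgue \<Omega> G \<and>
     set_integrable lebesgue \<Omega> (\<lambda>x. (norm (G x))\<^sup>2)"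

definition weak_grad :: "'a::euclidean_space set \<Rightarrow> ('a \<Rightarrow> real) \<Rightarrow> ('a \<Rightarrow> 'a) \<Rightarrow> bool" where
  "weak_grad \<Omega> u G \<longleftrightarrow>
     (\<forall>\<phi> D\<phi>. test_fun \<Omega> \<phi> D\<phi> \<longrightarrow> (\<forall>i\<in>Basis.
        (LINT x:\<Omega>|lebesgue. u x * (D\<phi> x \<bullet> i)) = - (LINT x:\<Omega>|lebesgue. (G x \<bullet> i) * \<phi> x)))"

definition H10 :: "'a::euclidean_space set \<Rightarrow> ('a \<Rightarrow> real) \<Rightarrow> ('a \<Rightarrow> 'a) \<Rightarrow> bool" where
  "H10 \<Omega> u G \<longleftrightarrow> L2_on \<Omega> u \<and> L2v_on \<Omega> G \<and> weak_grad \<Omega> u G \<and>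
     (\<exists>\<phi> D\<phi>. (\<forall>k::nat. test_fun \<Omega> (\<phi> k) (D\<phi> k)) \<and>
        (\<lambda>k. LINT x:\<Omega>|lebesgue. (\<phi> k x - u x)\<^sup>2) \<longlonglongrightarrow> 0 \<and>
        (\<lambda>k. LINT x:\<Omega>|lebesgue. (norm (D\<phi> k x - G x))\<^sup>2) \<longlonglongrightarrow> 0)"

end

theory Submission
  imports Defs
begin


definition pp :: "nat \<Rightarrow> real \<Rightarrow> real" where "pp n u = (1 - u^n)^3"
definition pp1 :: "nat \<Rightarrow> real \<Rightarrow> real" where
  "pp1 n u = -3*real n*u^(n-1)*(1-u^n)^2"
definition pp2 :: "nat \<Rightarrow> real \<Rightarrow> real" where
  "pp2 n u = -3*real n*(real n-1)*u^(n-2)*(1-u^n)^2 + 6*(real n)^2*u^(2*n-2)*(1-u^n)"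

lemma pp_deriv: "(pp n has_real_derivative pp1 n u) (at u)"
  unfolding pp_def[abs_def] pp1_def
  apply (rule derivative_eq_intros refl)+
  apply (simp add: algebra_simps power2_eq_square)
  done

lemma pp1_deriv: assumes "n \<ge> 3" shows "(pp1 n has_real_derivative pp2 n u) (at u)"
proof -
  obtain m where n: "n = m + 3" using assms by (metis add.commute le_Suc_ex)
  have A: "pp1 n = (\<lambda>u. -3*real n*u^(m+2)*(1-u^n)^2)" unfolding pp1_def n by (simp add: numeral_3_eq_3)
  have B: "pp2 n u = -3*real n*(real n-1)*u^(m+1)*(1-u^n)^2 + 6*(real n)^2*(u^(m+2)*u^(m+2))*(1-u^n)"
    unfolding pp2_def n by (simp add: numeral_3_eq_3 power_add[symmetric] mult_2_right algebra_simps)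
  have C: "n - 1 = m + 2" "real (m+2) = real n - 1" "n - Suc 0 = m + 2" using n by auto
  show ?thesis unfolding A B
    apply (rule derivative_eq_intros refl)+
    apply (simp only: C)
    apply (simp add: C algebra_simps power2_eq_square)
    done
qed


definition PP :: "nat \<Rightarrow> real \<Rightarrow> real" where
  "PP n u = (if u \<le> 0 then 1 else if u < 1 then pp n u else 0)"
definition PP1 :: "nat \<Rightarrow> real \<Rightarrow> real" where
  "PP1 n u = (if 0 < u \<and> u < 1 then pp1 n u else 0)"
definition PP2 :: "nat \<Rightarrow> real \<Rightarrow> real" where
  "PP2 n u = (if 0 < u \<and> u < 1 then pp2 n u else 0)"

lemma deriv_glue:
  fixes f g k :: "real \<Rightarrow> real"
  assumes "(f has_real_derivative D) (at x)" "(g has_real_derivative D) (at x)"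
    and "\<delta> > 0" and "\<And>y. y < x \<Longrightarrow> x - \<delta> < y \<Longrightarrow> k y = f y" "\<And>y. y > x \<Longrightarrow> y < x + \<delta> \<Longrightarrow> k y = g y" "k x = f x" "k x = g x"
  shows "(k has_real_derivative D) (at x)"
proof -
  have l: "((\<lambda>y. (k y - k x) / (y - x)) \<longlongrightarrow> D) (at_left x)"
  proof -
    have "((\<lambda>y. (f y - f x) / (y - x)) \<longlongrightarrow> D) (at_left x)"
      using assms(1) unfolding has_field_derivative_iff by (rule tendsto_mono[OF at_le, rotated]) simp
    moreover have "eventually (\<lambda>y. (f y - f x) / (y - x) = (k y - k x) / (y - x)) (at_left x)"
      using assms(3,4,6) by (auto simp: eventually_at_left_field intro!: exI[of _ "x - \<delta>"])
    ultimately show ?thesis by (rule Lim_transform_eventually)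
  qed
  have r: "((\<lambda>y. (k y - k x) / (y - x)) \<longlongrightarrow> D) (at_right x)"
  proof -
    have "((\<lambda>y. (g y - g x) / (y - x)) \<longlongrightarrow> D) (at_right x)"
      using assms(2) unfolding has_field_derivative_iff by (rule tendsto_mono[OF at_le, rotated]) simp
    moreover have "eventually (\<lambda>y. (g y - g x) / (y - x) = (k y - k x) / (y - x)) (at_right x)"
      using assms(3,5,7) by (auto simp: eventually_at_right_field intro!: exI[of _ "x + \<delta>"])
    ultimately show ?thesis by (rule Lim_transform_eventually)
  qed
  show ?thesis unfolding has_field_derivative_iff using l r filterlim_at_split by blast
qed

lemma deriv_local:
  fixes f k :: "real \<Rightarrow> real"
  assumes "(f has_real_derivative D) (at x)" "a < x" "x < b" "\<And>y. a < y \<Longrightarrow> y < b \<Longrightarrow> k y = f y"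
  shows "(k has_real_derivative D) (at x)"
proof -
  have "eventually (\<lambda>y. y \<in> {a<..<b}) (nhds x)"
    using assms(2,3) by (intro eventually_nhds_in_open) auto
  then have "eventually (\<lambda>y. k y = f y) (nhds x)"
    by eventually_elim (use assms(4) in auto)
  then show ?thesis using assms(1) DERIV_cong_ev by blast
qed

lemma pp_vals: assumes "n \<ge> 3"
  shows "pp n 0 = 1" "pp1 n 0 = 0" "pp2 n 0 = 0" "pp n 1 = 0" "pp1 n 1 = 0" "pp2 n 1 = 0"
  using assms by (auto simp: pp_def pp1_def pp2_def power_0_left)

lemma PP_deriv: assumes "n \<ge> 3" shows "(PP n has_real_derivative PP1 n u) (at u)"
proof -
  consider "u < 0" | "u = 0" | "0 < u \<and> u < 1" | "u = 1" | "u > 1" by linarith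
  then show ?thesis
  proof cases
    case 1
    show ?thesis by (rule deriv_local[of "\<lambda>_. 1" _ _ "u - 1" 0]) (use 1 in \<open>auto simp: PP_def PP1_def\<close>)
  next
    case 2
    show ?thesis by (rule deriv_glue[where f="\<lambda>_. 1" and g="pp n" and \<delta>="1/2"])
       (use 2 assms pp_deriv[of n 0] in \<open>auto simp: PP_def PP1_def pp_vals\<close>)
  next
    case 3
    show ?thesis by (rule deriv_local[where f="pp n" and a=0 and b=1]) (use 3 pp_deriv[of n u] in \<open>auto simp: PP_def PP1_def\<close>)
  next
    case 4
    show ?thesis by (rule deriv_glue[where f="pp n" and g="\<lambda>_. 0" and \<delta>="1/2"])
       (use 4 assms pp_deriv[of n 1] in \<open>auto simp: PP_def PP1_def pp_vals\<close>)
  next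
    case 5
    show ?thesis by (rule deriv_local[of "\<lambda>_. 0" _ _ 1 "u + 1"]) (use 5 in \<open>auto simp: PP_def PP1_def\<close>)
  qed
qed

lemma PP1_deriv: assumes "n \<ge> 3" shows "(PP1 n has_real_derivative PP2 n u) (at u)"
proof -
  consider "u < 0" | "u = 0" | "0 < u \<and> u < 1" | "u = 1" | "u > 1" by linarith
  then show ?thesis
  proof cases
    case 1
    show ?thesis by (rule deriv_local[of "\<lambda>_. 0" _ _ "u - 1" 0]) (use 1 in \<open>auto simp: PP1_def PP2_def\<close>)
  next
    case 2
    show ?thesis by (rule deriv_glue[where f="\<lambda>_. 0" and g="pp1 n" and \<delta>="1/2"])
       (use 2 assms pp1_deriv[OF assms, of 0] in \<open>auto simp: PP1_def PP2_def pp_vals\<close>)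
  next
    case 3
    show ?thesis by (rule deriv_local[where f="pp1 n" and a=0 and b=1]) (use 3 pp1_deriv[OF assms, of u] in \<open>auto simp: PP1_def PP2_def\<close>)
  next
    case 4
    show ?thesis by (rule deriv_glue[where f="pp1 n" and g="\<lambda>_. 0" and \<delta>="1/2"])
       (use 4 assms pp1_deriv[OF assms, of 1] in \<open>auto simp: PP1_def PP2_def pp_vals\<close>)
  next
    case 5
    show ?thesis by (rule deriv_local[of "\<lambda>_. 0" _ _ 1 "u + 1"]) (use 5 in \<open>auto simp: PP1_def PP2_def\<close>)
  qed
qed


lemma pp_range: assumes "0 < u" "u < 1" "n \<ge> 1" shows "0 < pp n u" "pp n u < 1"
proof -
  have "0 < u^n" "u^n < 1" using assms by (auto simp: power_less_one_iff)
  then show "0 < pp n u" "pp n u < 1" unfolding pp_def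
    by (auto simp: power_less_one_iff)
qed

lemma pp_gap: assumes "0 \<le> u" "u \<le> 1" shows "u^n \<le> 1 - pp n u"
proof -
  have a: "0 \<le> 1 - u^n" "1 - u^n \<le> 1" using assms by (auto intro: power_le_one)
  have b: "(1 - u^n)^2 \<le> 1" using a by (simp add: power_le_one)
  have "(1 - u^n)^3 = (1 - u^n) * (1 - u^n)^2" by (simp add: power2_eq_square power3_eq_cube)
  also have "\<dots> \<le> (1 - u^n) * 1" using a b by (intro mult_left_mono) auto
  finally have "(1 - u^n)^3 \<le> 1 - u^n" by simp
  then show ?thesis unfolding pp_def by simp
qed

lemma pp1_bounds: assumes "0 \<le> u" "u \<le> 1"
  shows "pp1 n u \<le> 0" "\<bar>pp1 n u\<bar> \<le> 3 * real n" "(pp1 n u)^2 \<le> 9 * (real n)^2 * (u^(n-1) * u^(n-1))"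
proof -
  have a: "0 \<le> 1 - u^n" "1 - u^n \<le> 1" "0 \<le> u^(n-1)" "u^(n-1) \<le> 1" using assms by (auto intro: power_le_one)
  have b: "(1 - u^n)^2 \<le> 1" using a by (simp add: power_le_one)
  show "pp1 n u \<le> 0" unfolding pp1_def using a by simp
  have "\<bar>pp1 n u\<bar> = 3 * real n * u^(n-1) * (1-u^n)^2" unfolding pp1_def using a by (simp add: abs_mult)
  also have "\<dots> \<le> 3 * real n * 1 * 1" using a b by (intro mult_mono) auto
  finally show "\<bar>pp1 n u\<bar> \<le> 3 * real n" by simp
  have "(pp1 n u)^2 = 9 * (real n)^2 * (u^(n-1) * u^(n-1)) * ((1-u^n)^2)^2" unfolding pp1_def
    by (simp add: power2_eq_square algebra_simps)
  also have "\<dots> \<le> 9 * (real n)^2 * (u^(n-1) * u^(n-1)) * 1"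
    using a b by (intro mult_left_mono) (auto simp: power_le_one)
  finally show "(pp1 n u)^2 \<le> 9 * (real n)^2 * (u^(n-1) * u^(n-1))" by simp
qed

lemma pp2_bound: assumes "0 \<le> u" "u \<le> 1" "n \<ge> 1"
  shows "\<bar>pp2 n u\<bar> \<le> 9 * (real n)^2"
proof -
  have a: "0 \<le> 1 - u^n" "1 - u^n \<le> 1" "0 \<le> u^(n-2)" "u^(n-2) \<le> 1" "0 \<le> u^(2*n-2)" "u^(2*n-2) \<le> 1"
    using assms by (auto intro: power_le_one)
  have b: "(1 - u^n)^2 \<le> 1" "0 \<le> (1 - u^n)^2" using a by (auto simp: power_le_one)
  have n: "0 \<le> real n - 1" using assms by simp
  have "\<bar>pp2 n u\<bar> \<le> \<bar>3*real n*(real n-1)*u^(n-2)*(1-u^n)^2\<bar> + \<bar>6*(real n)^2*u^(2*n-2)*(1-u^n)\<bar>"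
    unfolding pp2_def by linarith
  also have "\<bar>3*real n*(real n-1)*u^(n-2)*(1-u^n)^2\<bar> = 3*real n*(real n-1)*(u^(n-2)*(1-u^n)^2)"
    using a n by (simp add: abs_mult)
  also have "\<dots> \<le> 3*real n*(real n-1)*(1*1)"
    using a b n by (intro mult_left_mono mult_mono) auto
  also have "\<bar>6*(real n)^2*u^(2*n-2)*(1-u^n)\<bar> = 6*(real n)^2*(u^(2*n-2)*(1-u^n))"
    using a by (simp add: abs_mult)
  also have "\<dots> \<le> 6*(real n)^2*(1*1)"
    using a by (intro mult_left_mono mult_mono) auto
  finally show ?thesis by (simp add: power2_eq_square algebra_simps)
qed

lemma PP_range: "0 \<le> PP n u" "PP n u \<le> 1"
proof -
  have "0 \<le> pp n u \<and> pp n u \<le> 1" if "0 < u" "u < 1"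
  proof -
    have "0 \<le> 1 - u^n" "1 - u^n \<le> 1" using that by (auto simp: power_le_one)
    then show ?thesis unfolding pp_def by (simp add: power_le_one)
  qed
  then show "0 \<le> PP n u" "PP n u \<le> 1" by (auto simp: PP_def)
qed



definition Ef :: "(real \<Rightarrow> real) \<Rightarrow> real \<Rightarrow> real" where "Ef h t = exp (- Hfun h t)"

locale hctx =
  fixes h :: "real \<Rightarrow> real" and \<sigma> :: real
  assumes sig: "\<sigma> > 0" and hc: "continuous_on {0..<\<sigma>} h" and hpos: "\<And>s. s\<in>{0..<\<sigma>} \<Longrightarrow> h s > 0"
begin

lemma h_int: "0 \<le> a \<Longrightarrow> b < \<sigma> \<Longrightarrow> h integrable_on {a..b}"
  by (rule integrable_continuous_real) (rule continuous_on_subset[OF hc], auto)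

lemma H_mono: assumes "0 \<le> a" "a \<le> b" "b < \<sigma>" shows "Hfun h a \<le> Hfun h b"
proof -
  have "Hfun h b = Hfun h a + integral {a..b} h"
    unfolding Hfun_def using Henstock_Kurzweil_Integration.integral_combine[where a=0 and c=a and b=b and f=h] h_int[of 0 b] assms by auto
  moreover have "0 \<le> integral {a..b} h"
    using assms by (intro integral_nonneg h_int) (auto intro!: less_imp_le hpos)
  ultimately show ?thesis by simp
qed

lemma H_nonneg: "0 \<le> t \<Longrightarrow> t < \<sigma> \<Longrightarrow> 0 \<le> Hfun h t"
  using H_mono[of 0 t] by (simp add: Hfun_def)

lemma H_deriv: assumes "0 < t" "t < \<sigma>" shows "(Hfun h has_real_derivative h t) (at t)"
proof -
  have "((\<lambda>u. integral {0..u} h) has_vector_derivative h t) (at t within {0..(t+\<sigma>)/2})"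
    by (rule integral_has_vector_derivative) (use assms in \<open>auto intro: continuous_on_subset[OF hc]\<close>)
  then have "((\<lambda>u. integral {0..u} h) has_vector_derivative h t) (at t)"
    using assms by (subst (asm) at_within_interior[of t]) auto
  then show ?thesis unfolding Hfun_def[abs_def] by (simp add: has_real_derivative_iff_has_vector_derivative)
qed

lemma H_cont: "b < \<sigma> \<Longrightarrow> continuous_on {0..b} (Hfun h)"
  unfolding Hfun_def[abs_def]
  by (cases "0 \<le> b") (auto intro!: indefinite_integral_continuous_1 h_int)

lemma E_cont: "b < \<sigma> \<Longrightarrow> continuous_on {0..b} (Ef h)"
  unfolding Ef_def[abs_def] by (intro continuous_intros H_cont)

lemma E_pos: "0 < Ef h t" by (simp add: Ef_def)

lemma E_le1: "0 \<le> t \<Longrightarrow> t < \<sigma> \<Longrightarrow> Ef h t \<le> 1"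
  using H_nonneg by (simp add: Ef_def)

lemma E_anti: "0 \<le> a \<Longrightarrow> a \<le> b \<Longrightarrow> b < \<sigma> \<Longrightarrow> Ef h b \<le> Ef h a"
  using H_mono by (simp add: Ef_def)

lemma E_deriv: "0 < t \<Longrightarrow> t < \<sigma> \<Longrightarrow> (Ef h has_real_derivative (- h t * Ef h t)) (at t)"
  unfolding Ef_def[abs_def]
  by (rule derivative_eq_intros H_deriv refl | simp)+

lemma E_cont_open: "continuous_on {0<..<\<sigma>} (Ef h)"
  by (intro continuous_at_imp_continuous_on ballI DERIV_isCont[OF E_deriv]) auto

lemma E_int: "Ef h integrable_on {0..\<sigma>}"
proof -
  have "Ef h integrable_on {0<..<\<sigma>}"
  proof (rule measurable_bounded_by_integrable_imp_integrable[where g="\<lambda>_. 1"])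
    show "Ef h \<in> borel_measurable (lebesgue_on {0<..<\<sigma>})"
      by (rule continuous_imp_measurable_on_sets_lebesgue[OF E_cont_open]) auto
    show "(\<lambda>_. 1::real) integrable_on {0<..<\<sigma>}"
      by (simp add: integrable_on_open_interval_real integrable_continuous_real)
    show "norm (Ef h x) \<le> 1" if "x \<in> {0<..<\<sigma>}" for x
      using that E_le1[of x] E_pos[of x] by auto
  qed auto
  then show ?thesis by (simp add: integrable_on_Icc_iff_Ioo)
qed

lemma psi_diff: assumes "0 \<le> a" "a \<le> b" "b \<le> \<sigma>"
  shows "psi h b - psi h a = integral {a..b} (Ef h)"
  unfolding psi_def Ef_def[symmetric]
  using Henstock_Kurzweil_Integration.integral_combine[where a=0 and c=a and b=b and f="Ef h"] integrable_subinterval_real[OF E_int, where c=0 and d=b] assms by auto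

lemma psi_lip: assumes "0 \<le> a" "a \<le> b" "b \<le> \<sigma>"
  shows "0 \<le> psi h b - psi h a" "psi h b - psi h a \<le> b - a"
proof -
  have int: "Ef h integrable_on {a<..<b}"
    using integrable_subinterval_real[OF E_int, where c=a and d=b] assms by (simp add: integrable_on_Icc_iff_Ioo)
  have eq: "psi h b - psi h a = integral {a<..<b} (Ef h)"
    using psi_diff[OF assms] by (simp add: integral_open_interval_real)
  show "0 \<le> psi h b - psi h a" unfolding eq
    by (rule integral_nonneg[OF int]) (use E_pos in \<open>auto intro: less_imp_le\<close>)
  have "integral {a<..<b} (Ef h) \<le> integral {a<..<b} (\<lambda>_. 1)"
    by (rule integral_le[OF int]) (use assms E_le1 in \<open>auto simp: integrable_on_open_interval_real integrable_continuous_real\<close>)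
  also have "\<dots> = b - a" using assms by (simp add: integral_open_interval_real[symmetric])
  finally show "psi h b - psi h a \<le> b - a" unfolding eq .
qed

lemma psi_strict: assumes "0 \<le> a" "a < b" "b \<le> \<sigma>" shows "psi h a < psi h b"
proof -
  define c where "c = (a + b) / 2"
  have c: "a < c" "c < b" "c < \<sigma>" using assms by (auto simp: c_def)
  have "psi h c - psi h a = integral {a..c} (Ef h)" using psi_diff[of a c] c assms by auto
  also have "integral {a..c} (\<lambda>_. Ef h c) \<le> integral {a..c} (Ef h)"
    by (rule integral_le) (use c assms in \<open>auto intro!: integrable_continuous_real continuous_on_subset[OF E_cont[of c]] E_anti\<close>)
  finally have "(c - a) * Ef h c \<le> psi h c - psi h a" using c by simp
  moreover have "0 < (c - a) * Ef h c" using c E_pos by simp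
  moreover have "psi h c \<le> psi h b" using psi_lip(1)[of c b] c assms by auto
  ultimately show ?thesis by linarith
qed

lemma psi_0: "psi h 0 = 0" by (simp add: psi_def)

lemma psi_deriv: assumes "0 < t" "t < \<sigma>" shows "(psi h has_real_derivative Ef h t) (at t)"
proof -
  have "((\<lambda>u. integral {0..u} (Ef h)) has_vector_derivative Ef h t) (at t within {0..(t+\<sigma>)/2})"
    by (rule integral_has_vector_derivative) (use assms in \<open>auto intro: E_cont\<close>)
  then have "((\<lambda>u. integral {0..u} (Ef h)) has_vector_derivative Ef h t) (at t)"
    using assms by (subst (asm) at_within_interior[of t]) auto
  then show ?thesis unfolding psi_def[abs_def] Ef_def[symmetric] by (simp add: has_real_derivative_iff_has_vector_derivative)
qed

end


lemma deriv_flat: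
  fixes f g :: "real \<Rightarrow> real"
  assumes "(g has_real_derivative 0) (at x)" "\<And>y. \<bar>f y - f x\<bar> \<le> \<bar>g y - g x\<bar>"
  shows "(f has_real_derivative 0) (at x)"
proof -
  have "((\<lambda>y. (g y - g x) / (y - x)) \<longlongrightarrow> 0) (at x)" using assms(1) by (simp add: has_field_derivative_iff)
  then have "((\<lambda>y. \<bar>(g y - g x) / (y - x)\<bar>) \<longlongrightarrow> 0) (at x)" by (rule tendsto_rabs_zero)
  then have "((\<lambda>y. (f y - f x) / (y - x)) \<longlongrightarrow> 0) (at x)"
    by (rule Lim_null_comparison[rotated]) (use assms(2) in \<open>auto simp: abs_divide intro!: always_eventually divide_right_mono\<close>)
  then show ?thesis by (simp add: has_field_derivative_iff)
qed

locale prof = hctx +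
  fixes n :: nat and a d :: real
  assumes n3: "n \<ge> 3" and dpos: "d > 0"
begin

definition "w s = \<sigma> * PP n ((s - a) / d)"
definition "w1 s = \<sigma> * PP1 n ((s - a) / d) / d"
definition "w2 s = \<sigma> * PP2 n ((s - a) / d) / d^2"
definition "F s = psi h (w s)"
definition "F1 s = Ef h (w s) * w1 s"
definition "F2 s = (if a < s \<and> s < a + d then Ef h (w s) * (w2 s - h (w s) * (w1 s)^2) else 0)"

lemma w_range: "0 \<le> w s" "w s \<le> \<sigma>"
  using PP_range[of n "(s - a) / d"] sig by (auto simp: w_def mult_le_cancel_left1)

lemma u_in: "a < s \<Longrightarrow> s < a + d \<Longrightarrow> 0 < (s - a) / d \<and> (s - a) / d < 1"
  using dpos by (auto simp: field_simps)

lemma w_in: assumes "a < s" "s < a + d" shows "0 < w s" "w s < \<sigma>"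
  using pp_range[of "(s - a) / d" n] u_in[OF assms] n3 sig by (auto simp: w_def PP_def)

lemma w_left: "s \<le> a \<Longrightarrow> w s = \<sigma>"
  using dpos by (auto simp: w_def PP_def divide_le_0_iff)

lemma w_right: "s \<ge> a + d \<Longrightarrow> w s = 0"
  using dpos by (auto simp: w_def PP_def field_simps)

lemma w1_out: "\<not> (a < s \<and> s < a + d) \<Longrightarrow> w1 s = 0"
  using dpos by (auto simp: w1_def PP1_def field_simps)

lemma w2_out: "\<not> (a < s \<and> s < a + d) \<Longrightarrow> w2 s = 0"
  using dpos by (auto simp: w2_def PP2_def field_simps)

lemma w_deriv: "(w has_real_derivative w1 s) (at s)"
proof -
  have "((\<lambda>s. PP n ((s - a) / d)) has_real_derivative PP1 n ((s - a) / d) * (1 / d)) (at s)"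
    by (rule DERIV_chain2[OF PP_deriv[OF n3]]) (use dpos in \<open>auto intro!: derivative_eq_intros\<close>)
  then show ?thesis unfolding w_def[abs_def] w1_def
    using DERIV_cmult[where c=\<sigma>] dpos by fastforce
qed

lemma w1_deriv: "(w1 has_real_derivative w2 s) (at s)"
proof -
  have "((\<lambda>s. PP1 n ((s - a) / d)) has_real_derivative PP2 n ((s - a) / d) * (1 / d)) (at s)"
    by (rule DERIV_chain2[OF PP1_deriv[OF n3]]) (use dpos in \<open>auto intro!: derivative_eq_intros\<close>)
  from DERIV_cmult[OF this, of "\<sigma> / d"] show ?thesis unfolding w1_def[abs_def] w2_def
    using dpos by (simp add: power2_eq_square algebra_simps)
qed

lemma F_deriv: "(F has_real_derivative F1 s) (at s)"
proof (cases "a < s \<and> s < a + d")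
  case True
  show ?thesis unfolding F_def[abs_def] F1_def
    by (rule DERIV_chain2[OF psi_deriv w_deriv]) (use w_in True in auto)
next
  case False
  have "F1 s = 0" using w1_out[OF False] by (simp add: F1_def)
  moreover have "(F has_real_derivative 0) (at s)"
  proof (rule deriv_flat[where g = w])
    show "(w has_real_derivative 0) (at s)" using w_deriv[of s] w1_out[OF False] by simp
    show "\<bar>F y - F s\<bar> \<le> \<bar>w y - w s\<bar>" for y
    proof (cases "w s \<le> w y")
      case True
      then show ?thesis using psi_lip[of "w s" "w y"] w_range[of s] w_range[of y] by (simp add: F_def)
    next
      case False
      then show ?thesis using psi_lip[of "w y" "w s"] w_range[of s] w_range[of y] by (simp add: F_def)
    qed
  qed
  ultimately show ?thesis by simp
qed

lemma F1_deriv: "(F1 has_real_derivative F2 s) (at s)"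
proof (cases "a < s \<and> s < a + d")
  case True
  have D: "((\<lambda>s. Ef h (w s)) has_real_derivative (- h (w s) * Ef h (w s)) * w1 s) (at s)"
    by (rule DERIV_chain2[OF E_deriv w_deriv]) (use w_in True in auto)
  have e: "F2 s = Ef h (w s) * (w2 s - h (w s) * (w1 s)^2)" unfolding F2_def by (rule if_P[OF True])
  from DERIV_mult[OF D w1_deriv[of s]] show ?thesis
    unfolding F1_def[abs_def] e by (simp add: power2_eq_square algebra_simps)
next
  case False
  have "F2 s = 0" unfolding F2_def by (rule if_not_P[OF False])
  moreover have "(F1 has_real_derivative 0) (at s)"
  proof (rule deriv_flat[where g = w1])
    show "(w1 has_real_derivative 0) (at s)" using w1_deriv[of s] w2_out[OF False] by simp
    show "\<bar>F1 y - F1 s\<bar> \<le> \<bar>w1 y - w1 s\<bar>" for y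
    proof (cases "a < y \<and> y < a + d")
      case True
      have "Ef h (w y) \<le> 1" using E_le1[of "w y"] w_in[of y] True by auto
      then have "\<bar>Ef h (w y) * w1 y\<bar> \<le> 1 * \<bar>w1 y\<bar>" using E_pos[of "w y"]
        by (simp add: abs_mult mult_left_le_one_le)
      then show ?thesis using w1_out[OF False] by (simp add: F1_def)
    next
      case False
      then show ?thesis using w1_out[OF False] w1_out[of s] \<open>\<not> (a < s \<and> s < a + d)\<close> by (simp add: F1_def)
    qed
  qed
  ultimately show ?thesis by simp
qed

end


locale profb = prof +
  fixes \<gamma> M :: real
  assumes gam0: "0 \<le> \<gamma>" and hM: "\<And>t. t \<in> {0..<\<sigma>} \<Longrightarrow> h t * (\<sigma> - t) powr \<gamma> \<le> M"
    and ngam: "real n * \<gamma> \<le> 2 * real n - 2"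
begin

definition "K1 = 3 * real n * \<sigma> / d"
definition "K2 = 9 * (real n)^2 * \<sigma> / d^2"
definition "K3 = 9 * (real n)^2 * \<sigma>^2 * M / (d^2 * \<sigma> powr \<gamma>)"

lemma M_nonneg: "0 \<le> M"
  using hM[of 0] hpos[of 0] sig by (smt (verit) atLeastLessThan_iff mult_nonneg_nonneg powr_ge_zero)

lemma w1_bound: "\<bar>w1 s\<bar> \<le> K1"
proof (cases "a < s \<and> s < a + d")
  case True
  then have u: "0 < (s - a) / d" "(s - a) / d < 1" using u_in by auto
  have "\<bar>w1 s\<bar> = \<sigma> * \<bar>pp1 n ((s - a) / d)\<bar> / d" using u sig dpos by (simp add: w1_def PP1_def abs_mult)
  also have "\<dots> \<le> \<sigma> * (3 * real n) / d"
    using pp1_bounds(2)[of "(s - a) / d" n] u sig dpos by (intro divide_right_mono mult_left_mono) auto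
  finally show ?thesis by (simp add: K1_def mult_ac)
next
  case False
  then show ?thesis using w1_out[OF False] sig dpos by (simp add: K1_def)
qed

lemma w2_bound: "\<bar>w2 s\<bar> \<le> K2"
proof (cases "a < s \<and> s < a + d")
  case True
  then have u: "0 < (s - a) / d" "(s - a) / d < 1" using u_in by auto
  have "\<bar>w2 s\<bar> = \<sigma> * \<bar>pp2 n ((s - a) / d)\<bar> / d^2" using u sig dpos by (simp add: w2_def PP2_def abs_mult)
  also have "\<dots> \<le> \<sigma> * (9 * (real n)^2) / d^2"
    using pp2_bound[of "(s - a) / d" n] u sig dpos n3 by (intro divide_right_mono mult_left_mono) auto
  finally show ?thesis by (simp add: K2_def mult_ac)
next
  case False
  then show ?thesis using w2_out[OF False] sig dpos by (simp add: K2_def)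
qed

lemma hw1_bound: assumes "a < s" "s < a + d" shows "h (w s) * (w1 s)^2 \<le> K3"
proof -
  define u where "u = (s - a) / d"
  have u: "0 < u" "u < 1" using u_in[OF assms] by (auto simp: u_def)
  have ws: "w s = \<sigma> * pp n u" using u by (simp add: w_def PP_def u_def)
  have w1s: "w1 s = \<sigma> * pp1 n u / d" using u by (simp add: w1_def PP1_def u_def)
  have "\<sigma> * u^n \<le> \<sigma> * (1 - pp n u)" using pp_gap[of u n] u sig by (intro mult_left_mono) auto
  then have gap: "\<sigma> * u^n \<le> \<sigma> - w s" unfolding ws by (simp add: algebra_simps)
  have pos: "0 < \<sigma> * u^n" using u sig by simp
  define A where "A = (\<sigma> - w s) powr \<gamma>"
  define B where "B = \<sigma> powr \<gamma> * u powr (real n * \<gamma>)"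
  have B: "B = (\<sigma> * u^n) powr \<gamma>" using u sig
    by (simp add: B_def powr_mult powr_powr powr_realpow[symmetric] mult.commute)
  have Bpos: "0 < B" using u sig by (simp add: B_def)
  have BA: "B \<le> A" unfolding A_def B using gap pos gam0 by (intro powr_mono2) auto
  have hw: "h (w s) * A \<le> M" unfolding A_def using hM[of "w s"] w_in[OF assms] by auto
  have h0: "0 \<le> h (w s)" using hpos[of "w s"] w_in[OF assms] by auto
  have hB: "h (w s) * B \<le> M" using hw mult_left_mono[OF BA h0] by linarith
  have "(w1 s)^2 = \<sigma>^2 * (pp1 n u)^2 / d^2" by (simp add: w1s power_divide power_mult_distrib)
  also have "\<dots> \<le> \<sigma>^2 * (9 * (real n)^2 * (u^(n-1) * u^(n-1))) / d^2"
    using pp1_bounds(3)[of u n] u by (intro divide_right_mono mult_left_mono) auto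
  also have "u^(n-1) * u^(n-1) = u powr (2 * real n - 2)"
    using u n3 by (simp add: powr_realpow[symmetric] powr_add[symmetric] of_nat_diff)
  also have "\<dots> \<le> u powr (real n * \<gamma>)" using u ngam by (intro powr_mono') auto
  finally have w1sq: "(w1 s)^2 \<le> \<sigma>^2 * (9 * (real n)^2 * u powr (real n * \<gamma>)) / d^2"
    using u dpos by (simp add: divide_right_mono mult_left_mono)
  have "h (w s) * (w1 s)^2 \<le> h (w s) * (\<sigma>^2 * (9 * (real n)^2 * u powr (real n * \<gamma>)) / d^2)"
    using w1sq h0 by (rule mult_left_mono)
  also have "\<dots> = (h (w s) * B) * (9 * (real n)^2 * \<sigma>^2 / (d^2 * \<sigma> powr \<gamma>))"
    using sig by (simp add: B_def field_simps)
  also have "\<dots> \<le> M * (9 * (real n)^2 * \<sigma>^2 / (d^2 * \<sigma> powr \<gamma>))"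
    using hB sig dpos by (intro mult_right_mono) auto
  finally show ?thesis by (simp add: K3_def mult_ac)
qed

lemma F1_bound: "\<bar>F1 s\<bar> \<le> K1"
proof (cases "a < s \<and> s < a + d")
  case True
  have "Ef h (w s) \<le> 1" using E_le1[of "w s"] w_in[of s] w_range[of s] True by auto
  then have "\<bar>F1 s\<bar> \<le> \<bar>w1 s\<bar>" using E_pos[of "w s"] by (simp add: F1_def abs_mult mult_left_le_one_le)
  then show ?thesis using w1_bound[of s] by linarith
next
  case False
  then show ?thesis using w1_out[OF False] w1_bound[of s] by (simp add: F1_def)
qed

lemma F2_bound: "\<bar>F2 s\<bar> \<le> K2 + K3"
proof (cases "a < s \<and> s < a + d")
  case True
  have E: "Ef h (w s) \<le> 1" "0 < Ef h (w s)" using E_le1[of "w s"] E_pos w_in[of s] w_range[of s] True by auto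
  have h0: "0 \<le> h (w s) * (w1 s)^2" using hpos[of "w s"] w_in[of s] True by auto
  have "\<bar>F2 s\<bar> = Ef h (w s) * \<bar>w2 s - h (w s) * (w1 s)^2\<bar>" using True E by (simp add: F2_def abs_mult)
  also have "\<dots> \<le> \<bar>w2 s - h (w s) * (w1 s)^2\<bar>" using E by (simp add: mult_left_le_one_le)
  also have "\<dots> \<le> K2 + K3" using w2_bound[of s] hw1_bound[of s] True h0 by linarith
  finally show ?thesis .
next
  case False
  have "0 \<le> K2" "0 \<le> K3" using sig dpos M_nonneg by (auto simp: K2_def K3_def)
  then show ?thesis unfolding F2_def if_not_P[OF False] by simp
qed

lemma key_ineq:
  assumes "a < s" "s < a + d" "0 \<le> s" "s \<le> S" and that: "0 \<le> Nn"
  shows "- (2 * Nn * F1 s + 4 * s * F2 s) \<le> (2 * Nn * K1 + 4 * S * K2 + 4 * S * K3) * Ef h (w s)"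
proof -
  have E: "0 < Ef h (w s)" using E_pos by auto
  have e: "- (2 * Nn * F1 s + 4 * s * F2 s) = Ef h (w s) * (2 * Nn * (- w1 s) + 4 * s * (- w2 s) + 4 * s * (h (w s) * (w1 s)^2))"
    using assms by (simp add: F1_def F2_def algebra_simps)
  have "2 * Nn * (- w1 s) \<le> 2 * Nn * K1" using w1_bound[of s] that by (intro mult_left_mono) auto
  moreover have "4 * s * (- w2 s) \<le> 4 * S * K2"
  proof -
    have k: "- w2 s \<le> K2" "0 \<le> K2" using w2_bound[of s] sig dpos by (auto simp: K2_def)
    have "4 * s * (- w2 s) \<le> 4 * s * K2" using k assms by (intro mult_left_mono) auto
    also have "\<dots> \<le> 4 * S * K2" using k assms by (intro mult_right_mono) auto
    finally show ?thesis .
  qed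
  moreover have "4 * s * (h (w s) * (w1 s)^2) \<le> 4 * S * K3"
    using hw1_bound[OF assms(1,2)] assms hpos[of "w s"] w_in[OF assms(1,2)] by (intro mult_mono) auto
  ultimately have "2 * Nn * (- w1 s) + 4 * s * (- w2 s) + 4 * s * (h (w s) * (w1 s)^2) \<le> 2 * Nn * K1 + 4 * S * K2 + 4 * S * K3"
    by linarith
  then show ?thesis unfolding e using E by (simp add: mult.commute mult_right_mono)
qed

end


lemma integral_translate_lborel:
  fixes G :: "'a::euclidean_space \<Rightarrow> real"
  assumes "G \<in> borel_measurable borel"
  shows "integral\<^sup>L lborel (\<lambda>x. G (c + x)) = integral\<^sup>L lborel G"
proof -
  have "integral\<^sup>L lborel G = integral\<^sup>L (distr lborel borel ((+) c)) G"
    by (simp add: lborel_distr_plus)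
  also have "\<dots> = integral\<^sup>L lborel (\<lambda>x. G (c + x))"
    by (rule integral_distr) (use assms in auto)
  finally show ?thesis by simp
qed

lemma integrable_translate_lborel:
  fixes G :: "'a::euclidean_space \<Rightarrow> real"
  assumes "G \<in> borel_measurable borel" "integrable lborel G"
  shows "integrable lborel (\<lambda>x. G (c + x))"
proof -
  have "integrable (distr lborel borel ((+) c)) G" using assms by (simp add: lborel_distr_plus)
  then show ?thesis by (subst (asm) integrable_distr_eq) (use assms in auto)
qed

lemma ibp0:
  fixes G DG :: "'a::euclidean_space \<Rightarrow> real" and e :: 'a
  assumes cont: "continuous_on UNIV G"
    and der: "\<And>x. ((\<lambda>t. G (x + t *\<^sub>R e)) has_real_derivative DG x) (at 0)"
    and meas: "DG \<in> borel_measurable borel"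
    and bnd: "\<And>y. norm y \<le> r + 2 \<Longrightarrow> \<bar>DG y\<bar> \<le> B"
    and supp: "\<And>x. r \<le> norm x \<Longrightarrow> G x = 0"
    and ne: "norm e \<le> 1" and r0: "0 \<le> r"
  shows "integrable lborel DG" "integral\<^sup>L lborel DG = 0"
proof -
  have Gm: "G \<in> borel_measurable borel" using cont by (rule borel_measurable_continuous_onI)
  have Gint: "integrable lborel G"
  proof -
    have "integrable lborel (\<lambda>x. indicator (cball 0 r) x *\<^sub>R G x)"
      by (rule borel_integrable_compact) (auto intro: continuous_on_subset[OF cont])
    moreover have "(\<lambda>x. indicator (cball 0 r) x *\<^sub>R G x) = G"
      using supp by (force simp: indicator_def)
    ultimately show ?thesis by simp
  qed
  define t :: "nat \<Rightarrow> real" where "t k = inverse (real (Suc k))" for k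
  have tpos: "0 < t k" "t k \<le> 1" for k by (auto simp: t_def field_simps)
  define q where "q k x = (G (x + t k *\<^sub>R e) - G x) / t k" for k x
  have der2: "((\<lambda>s. G (x + s *\<^sub>R e)) has_real_derivative DG (x + \<tau> *\<^sub>R e)) (at \<tau>)" for x \<tau>
  proof -
    have "((\<lambda>s. G ((x + \<tau> *\<^sub>R e) + s *\<^sub>R e)) has_real_derivative DG (x + \<tau> *\<^sub>R e)) (at 0)" by (rule der)
    then have "((\<lambda>s. G (x + (s + \<tau>) *\<^sub>R e)) has_real_derivative DG (x + \<tau> *\<^sub>R e)) (at 0)"
      by (simp add: scaleR_add_left add_ac)
    then show ?thesis using DERIV_shift[of "\<lambda>s. G (x + s *\<^sub>R e)" "DG (x + \<tau> *\<^sub>R e)" 0 \<tau>] by simp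
  qed
  have qm: "q k \<in> borel_measurable borel" for k
    unfolding q_def by (intro borel_measurable_divide borel_measurable_diff measurable_compose[OF _ Gm] Gm) auto
  define wb where "wb x = B * indicator (ball (0::'a) (r + 1)) x" for x
  have wint: "integrable lborel wb"
    unfolding wb_def by (intro integrable_mult_right integrable_real_indicator emeasure_lborel_ball_finite) auto
  have qbound: "\<bar>q k x\<bar> \<le> wb x" for k x
  proof (cases "norm x < r + 1")
    case True
    obtain z where z: "0 < z" "z < t k" "G (x + t k *\<^sub>R e) - G (x + 0 *\<^sub>R e) = (t k - 0) * DG (x + z *\<^sub>R e)"
      using MVT2[of 0 "t k" "\<lambda>s. G (x + s *\<^sub>R e)" "\<lambda>s. DG (x + s *\<^sub>R e)"] tpos[of k] der2 by blast
    have "norm (x + z *\<^sub>R e) \<le> norm x + z * norm e" using z by (simp add: norm_triangle_le)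
    also have "\<dots> \<le> r + 2" using True z tpos[of k] ne mult_mono[of z 1 "norm e" 1] by auto
    finally have "\<bar>DG (x + z *\<^sub>R e)\<bar> \<le> B" by (rule bnd)
    moreover have "q k x = DG (x + z *\<^sub>R e)" using z tpos[of k] by (simp add: q_def)
    ultimately show ?thesis using True by (simp add: wb_def)
  next
    case False
    have "norm x \<le> norm (x + t k *\<^sub>R e) + norm (t k *\<^sub>R e)" using norm_triangle_ineq[of "x + t k *\<^sub>R e" "- (t k *\<^sub>R e)"] by simp
    moreover have "norm (t k *\<^sub>R e) \<le> 1" using tpos[of k] ne mult_mono[of "t k" 1 "norm e" 1] by auto
    ultimately have "r \<le> norm (x + t k *\<^sub>R e)" using False by linarith
    then have "q k x = 0" using supp[of x] supp[of "x + t k *\<^sub>R e"] False by (simp add: q_def)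
    moreover have "0 \<le> B" using bnd[of 0] r0 by (smt (verit) abs_ge_zero norm_zero)
    ultimately show ?thesis using False by (simp add: wb_def)
  qed
  have qlim: "(\<lambda>k. q k x) \<longlonglongrightarrow> DG x" for x
  proof -
    have "((\<lambda>s. (G (x + s *\<^sub>R e) - G (x + 0 *\<^sub>R e)) / (s - 0)) \<longlongrightarrow> DG x) (at 0)"
      using der[of x] unfolding has_field_derivative_iff .
    moreover have "filterlim t (at 0) sequentially"
    proof -
      have "t = (\<lambda>n. inverse (real (Suc n)))" by (simp add: t_def fun_eq_iff)
      then have "t \<longlonglongrightarrow> 0" using LIMSEQ_inverse_real_of_nat by simp
      then show ?thesis unfolding filterlim_at using tpos by (auto intro!: always_eventually simp: less_imp_neq[symmetric])
    qed
    ultimately have "((\<lambda>k. (G (x + t k *\<^sub>R e) - G (x + 0 *\<^sub>R e)) / (t k - 0)) \<longlongrightarrow> DG x) sequentially"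
      by (rule filterlim_compose)
    then show ?thesis by (simp add: q_def)
  qed
  have qint0: "integral\<^sup>L lborel (q k) = 0" for k
  proof -
    have i1: "integrable lborel (\<lambda>x. G (t k *\<^sub>R e + x))" by (rule integrable_translate_lborel[OF Gm Gint])
    have "integral\<^sup>L lborel (\<lambda>x. G (x + t k *\<^sub>R e) - G x) = integral\<^sup>L lborel (\<lambda>x. G (t k *\<^sub>R e + x)) - integral\<^sup>L lborel G"
      using i1 Gint by (simp add: add.commute)
    also have "\<dots> = 0" using integral_translate_lborel[OF Gm] by simp
    finally show ?thesis unfolding q_def by simp
  qed
  show "integrable lborel DG"
    by (rule integrable_dominated_convergence[where M=lborel and s=q and w=wb]) (use qlim qbound meas qm wint in auto)
  have "(\<lambda>k. integral\<^sup>L lborel (q k)) \<longlonglongrightarrow> integral\<^sup>L lborel DG"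
    by (rule integral_dominated_convergence[where M=lborel and s=q and w=wb]) (use qlim qbound meas qm wint in auto)
  then show "integral\<^sup>L lborel DG = 0" using qint0 by (simp add: LIMSEQ_const_iff)
qed



lemma line_deriv:
  fixes f :: "'a::real_normed_vector \<Rightarrow> real"
  assumes "(f has_derivative f') (at x)"
  shows "((\<lambda>t. f (x + t *\<^sub>R e)) has_real_derivative f' e) (at 0)"
proof -
  have l: "((\<lambda>t::real. x + t *\<^sub>R e) has_derivative (\<lambda>t. t *\<^sub>R e)) (at 0)"
    by (auto intro!: derivative_eq_intros)
  have "((\<lambda>t. f (x + t *\<^sub>R e)) has_derivative (\<lambda>t. f' (t *\<^sub>R e))) (at 0)"
    using has_derivative_compose[OF l, of f f'] assms by simp
  moreover have "(\<lambda>t. f' (t *\<^sub>R e)) = (*) (f' e)"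
    using has_derivative_bounded_linear[OF assms] by (auto simp: fun_eq_iff linear_simps)
  ultimately show ?thesis by (simp add: has_field_derivative_def)
qed

lemma real_deriv_compose:
  fixes g :: "'a::real_normed_vector \<Rightarrow> real"
  assumes "(f has_real_derivative D) (at (g x))" "(g has_derivative g') (at x)"
  shows "((\<lambda>x. f (g x)) has_derivative (\<lambda>y. D * g' y)) (at x)"
  using has_derivative_compose[OF assms(2) has_field_derivative_imp_has_derivative[OF assms(1)]] .

context profb
begin

lemma F_cont: "continuous_on UNIV F"
  by (intro continuous_at_imp_continuous_on ballI DERIV_isCont[OF F_deriv])
lemma F1_cont: "continuous_on UNIV F1"
  by (intro continuous_at_imp_continuous_on ballI DERIV_isCont[OF F1_deriv])

definition v :: "'n::euclidean_space \<Rightarrow> real" where "v x = F (x \<bullet> x)"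
definition Gv :: "'n::euclidean_space \<Rightarrow> 'n" where "Gv x = (2 * F1 (x \<bullet> x)) *\<^sub>R x"
definition dv :: "'n::euclidean_space \<Rightarrow> real" where
  "dv x = 2 * real DIM('n) * F1 (x \<bullet> x) + 4 * (x \<bullet> x) * F2 (x \<bullet> x)"

lemma v_deriv: "(v has_derivative (\<lambda>y. Gv x \<bullet> y)) (at x)"
proof -
  have "((\<lambda>x. F (x \<bullet> x)) has_derivative (\<lambda>y. F1 (x \<bullet> x) * (x \<bullet> y + y \<bullet> x))) (at x)"
    by (rule real_deriv_compose[OF F_deriv]) (auto intro!: derivative_eq_intros)
  then show ?thesis unfolding v_def[abs_def] Gv_def
    by (rule has_derivative_eq_rhs) (auto simp: fun_eq_iff inner_commute algebra_simps)
qed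

lemma v_cont: "continuous_on UNIV (v :: 'n::euclidean_space \<Rightarrow> real)"
  unfolding v_def[abs_def] by (intro continuous_on_compose2[OF F_cont] continuous_intros) auto

lemma Gv_cont: "continuous_on UNIV (Gv :: 'n::euclidean_space \<Rightarrow> 'n)"
  unfolding Gv_def[abs_def] by (intro continuous_intros continuous_on_compose2[OF F1_cont]) auto

lemma Gi_deriv: "((\<lambda>y. Gv y \<bullet> i) has_derivative
    (\<lambda>z. 2 * (F2 (x \<bullet> x) * (x \<bullet> z + z \<bullet> x)) * (x \<bullet> i) + 2 * F1 (x \<bullet> x) * (z \<bullet> i))) (at x)"
proof -
  have d1: "((\<lambda>x. F1 (x \<bullet> x)) has_derivative (\<lambda>y. F2 (x \<bullet> x) * (x \<bullet> y + y \<bullet> x))) (at x)"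
    by (rule real_deriv_compose[OF F1_deriv]) (auto intro!: derivative_eq_intros)
  have "((\<lambda>y. (2 * F1 (y \<bullet> y)) * (y \<bullet> i)) has_derivative
    (\<lambda>z. 2 * (F2 (x \<bullet> x) * (x \<bullet> z + z \<bullet> x)) * (x \<bullet> i) + 2 * F1 (x \<bullet> x) * (z \<bullet> i))) (at x)"
    by (rule derivative_eq_intros d1 refl | simp)+ (simp add: algebra_simps fun_eq_iff)
  then show ?thesis unfolding Gv_def by (simp add: inner_commute)
qed

lemma Gi_line: "i \<in> Basis \<Longrightarrow> ((\<lambda>t. Gv (x + t *\<^sub>R i) \<bullet> i) has_real_derivative
    4 * F2 (x \<bullet> x) * (x \<bullet> i)^2 + 2 * F1 (x \<bullet> x)) (at 0)"
  using line_deriv[OF Gi_deriv[of i x], of i] by (simp add: inner_commute power2_eq_square algebra_simps)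

lemma dv_sum: "dv x = (\<Sum>i\<in>Basis. 4 * F2 (x \<bullet> x) * (x \<bullet> i)^2 + 2 * F1 (x \<bullet> x))" for x :: "'n::euclidean_space"
proof -
  have e: "(\<Sum>i\<in>Basis. (x \<bullet> i)^2) = x \<bullet> x" by (simp add: euclidean_inner[of x x] power2_eq_square)
  have "(\<Sum>i\<in>Basis. 4 * F2 (x \<bullet> x) * (x \<bullet> i)^2 + 2 * F1 (x \<bullet> x)) =
      (\<Sum>i\<in>Basis. 4 * F2 (x \<bullet> x) * (x \<bullet> i)^2) + (\<Sum>i\<in>(Basis::'n set). 2 * F1 (x \<bullet> x))"
    by (rule sum.distrib)
  also have "(\<Sum>i\<in>Basis. 4 * F2 (x \<bullet> x) * (x \<bullet> i)^2) = 4 * F2 (x \<bullet> x) * (\<Sum>i\<in>Basis. (x \<bullet> i)^2)"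
    by (rule sum_distrib_left[symmetric])
  also have "(\<Sum>i\<in>(Basis::'n set). 2 * F1 (x \<bullet> x)) = real DIM('n) * (2 * F1 (x \<bullet> x))"
    by simp
  finally show ?thesis unfolding e dv_def by (simp add: mult_ac)
qed

lemma Gv_inner_sum: "Gv x \<bullet> y = (\<Sum>i\<in>Basis. (Gv x \<bullet> i) * (y \<bullet> i))"
  by (rule euclidean_inner)

lemma w_cont: "continuous_on UNIV w"
  by (intro continuous_at_imp_continuous_on ballI DERIV_isCont[OF w_deriv])
lemma w1_cont: "continuous_on UNIV w1"
  by (intro continuous_at_imp_continuous_on ballI DERIV_isCont[OF w1_deriv])

lemma w2_cont: "continuous_on {a<..<a+d} w2"
proof -
  have "continuous_on {a<..<a+d} (\<lambda>s. \<sigma> * pp2 n ((s - a) / d) / d^2)"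
    unfolding pp2_def by (intro continuous_intros) (use dpos in auto)
  moreover have "\<And>s. s \<in> {a<..<a+d} \<Longrightarrow> \<sigma> * pp2 n ((s - a) / d) / d^2 = w2 s"
    using u_in by (auto simp: w2_def PP2_def)
  ultimately show ?thesis by (rule continuous_on_eq)
qed

lemma F2_meas: "F2 \<in> borel_measurable borel"
proof -
  let ?f = "\<lambda>s. Ef h (w s) * (w2 s - h (w s) * (w1 s)^2)"
  have wA: "w ` {a<..<a+d} \<subseteq> {0<..<\<sigma>}" using w_in by auto
  have c1: "continuous_on {a<..<a+d} (\<lambda>s. Ef h (w s))"
    by (rule continuous_on_compose2[OF E_cont_open continuous_on_subset[OF w_cont] wA]) auto
  have c2: "continuous_on {a<..<a+d} (\<lambda>s. h (w s))"
    by (rule continuous_on_compose2[OF hc continuous_on_subset[OF w_cont]]) (use wA in auto)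
  have "continuous_on {a<..<a+d} ?f"
    by (intro continuous_intros c1 c2 w2_cont continuous_on_subset[OF w1_cont]) auto
  then have "(\<lambda>s. if s \<in> {a<..<a+d} then ?f s else 0) \<in> borel_measurable borel"
    by (intro borel_measurable_continuous_on_if) auto
  moreover have "(\<lambda>s. if s \<in> {a<..<a+d} then ?f s else 0) = F2"
    by (auto simp: F2_def fun_eq_iff)
  ultimately show ?thesis by simp
qed

lemma dv_meas: "(dv :: 'n::euclidean_space \<Rightarrow> real) \<in> borel_measurable borel"
proof -
  have "(\<lambda>x::'n. x \<bullet> x) \<in> borel_measurable borel" by (intro borel_measurable_continuous_onI continuous_intros)
  then have "(\<lambda>x::'n. F2 (x \<bullet> x)) \<in> borel_measurable borel" using F2_meas by (rule measurable_compose)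
  moreover have "(\<lambda>x::'n. F1 (x \<bullet> x)) \<in> borel_measurable borel"
    by (intro borel_measurable_continuous_onI continuous_on_compose2[OF F1_cont] continuous_intros) auto
  ultimately show ?thesis unfolding dv_def[abs_def] by measurable
qed

lemma v_out: "a + d \<le> x \<bullet> x \<Longrightarrow> v x = 0"
  using w_right psi_0 by (simp add: v_def F_def)
lemma Gv_out: "a + d \<le> x \<bullet> x \<Longrightarrow> Gv x = 0"
  using w1_out[of "x \<bullet> x"] by (simp add: Gv_def F1_def)
lemma v_in: "x \<bullet> x \<le> a \<Longrightarrow> v x = psi h \<sigma>"
  using w_left by (simp add: v_def F_def)
lemma v_range: "0 \<le> v x" "v x \<le> psi h \<sigma>"
  using psi_lip[of 0 "w (x \<bullet> x)"] psi_lip[of "w (x \<bullet> x)" \<sigma>] w_range[of "x \<bullet> x"] psi_0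
  by (auto simp: v_def F_def)

lemma Gv_bound: "norm (Gv x) \<le> 2 * K1 * norm x"
  using F1_bound[of "x \<bullet> x"] by (simp add: Gv_def mult_right_mono)

lemma dv_bound: "\<bar>dv x\<bar> \<le> 2 * real DIM('n) * K1 + 4 * (x \<bullet> x) * (K2 + K3)" for x :: "'n::euclidean_space"
proof -
  have "\<bar>dv x\<bar> \<le> \<bar>2 * real DIM('n) * F1 (x \<bullet> x)\<bar> + \<bar>4 * (x \<bullet> x) * F2 (x \<bullet> x)\<bar>"
    unfolding dv_def by linarith
  also have "\<bar>2 * real DIM('n) * F1 (x \<bullet> x)\<bar> \<le> 2 * real DIM('n) * K1"
    using F1_bound[of "x \<bullet> x"] by (simp add: abs_mult)
  also have "\<bar>4 * (x \<bullet> x) * F2 (x \<bullet> x)\<bar> \<le> 4 * (x \<bullet> x) * (K2 + K3)"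
    using F2_bound[of "x \<bullet> x"] by (simp add: abs_mult mult_left_mono)
  finally show ?thesis by simp
qed

end


lemma int_bm:
  fixes f :: "'a::euclidean_space \<Rightarrow> real"
  assumes "f \<in> borel_measurable borel" "\<And>y. norm y \<le> r \<Longrightarrow> \<bar>f y\<bar> \<le> B" "\<And>x. r \<le> norm x \<Longrightarrow> f x = 0"
  shows "integrable lborel f"
proof (rule Bochner_Integration.integrable_bound)
  show "integrable lborel (\<lambda>x. B * indicator (cball (0::'a) r) x)"
    by (intro integrable_mult_right integrable_real_indicator emeasure_lborel_cball_finite) auto
  show "f \<in> borel_measurable lborel" using assms(1) by simp
  show "AE x in lborel. norm (f x) \<le> norm (B * indicator (cball (0::'a) r) x)"
  proof (intro AE_I2)
    fix x :: 'a
    show "norm (f x) \<le> norm (B * indicator (cball 0 r) x)"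
    proof (cases "norm x \<le> r")
      case True then show ?thesis using assms(2)[OF True] by (simp add: indicator_def)
    next
      case False then show ?thesis using assms(3)[of x] by simp
    qed
  qed
qed

lemma cont_bounded:
  fixes f :: "'a::euclidean_space \<Rightarrow> 'b::real_normed_vector"
  assumes "continuous_on UNIV f"
  shows "\<exists>B. \<forall>y. norm y \<le> r \<longrightarrow> norm (f y) \<le> B"
proof -
  have "compact (f ` cball 0 r)" by (rule compact_continuous_image[OF continuous_on_subset[OF assms]]) auto
  then obtain B where "\<forall>z\<in>f ` cball 0 r. norm z \<le> B" using compact_imp_bounded bounded_iff by metis
  then show ?thesis by (intro exI[of _ B]) auto
qed

lemma lint_to_lborel:
  fixes f :: "'a::euclidean_space \<Rightarrow> real"
  assumes "f \<in> borel_measurable borel" "\<And>x. x \<notin> S \<Longrightarrow> f x = 0"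
  shows "(LINT x:S|lebesgue. f x) = integral\<^sup>L lborel f"
proof -
  have "(\<lambda>x. indicator S x *\<^sub>R f x) = f" using assms(2) by (auto simp: fun_eq_iff indicator_def)
  then have "(LINT x:S|lebesgue. f x) = integral\<^sup>L lebesgue f" by (simp add: set_lebesgue_integral_def)
  also have "\<dots> = integral\<^sup>L lborel f" by (rule integral_completion) (use assms in simp)
  finally show ?thesis .
qed

lemma sint_from_lborel:
  fixes f :: "'a::euclidean_space \<Rightarrow> real"
  assumes "f \<in> borel_measurable borel" "integrable lborel (\<lambda>x. indicator S x * f x)" "S \<in> sets borel"
  shows "set_integrable lebesgue S f"
  unfolding set_integrable_def using assms by (subst integrable_completion) auto

lemma test_zero: assumes "test_fun (ball 0 R) \<phi> D\<phi>" "R \<le> norm x" shows "\<phi> x = 0"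
proof (rule ccontr)
  assume "\<phi> x \<noteq> 0"
  then have "x \<in> closure {x. \<phi> x \<noteq> 0}" by (meson closure_subset mem_Collect_eq subsetD)
  moreover have "closure {x. \<phi> x \<noteq> 0} \<subseteq> ball 0 R" using assms(1) unfolding test_fun_def by (elim conjE)
  ultimately have "x \<in> ball 0 R" by (rule subsetD[rotated])
  then show False using assms(2) by simp
qed

lemma test_cont: "test_fun \<Omega> \<phi> D\<phi> \<Longrightarrow> continuous_on UNIV \<phi>"
  unfolding test_fun_def
  by (intro continuous_at_imp_continuous_on ballI has_derivative_continuous) blast

lemma L2_L1:
  fixes f :: "nat \<Rightarrow> 'a \<Rightarrow> real"
  assumes fm: "\<And>k. f k \<in> borel_measurable M" and fi: "\<And>k. integrable M (\<lambda>x. (f k x)^2)"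
    and lim: "(\<lambda>k. integral\<^sup>L M (\<lambda>x. (f k x)^2)) \<longlonglongrightarrow> 0"
    and S: "S \<in> sets M" "emeasure M S < \<infinity>" and z: "\<And>k x. x \<notin> S \<Longrightarrow> f k x = 0"
  shows "\<And>k. integrable M (\<lambda>x. \<bar>f k x\<bar>)" "(\<lambda>k. integral\<^sup>L M (\<lambda>x. \<bar>f k x\<bar>)) \<longlonglongrightarrow> 0"
proof -
  have Si: "integrable M (indicator S :: 'a \<Rightarrow> real)" using S by auto
  have pw: "\<bar>f k x\<bar> \<le> (f k x)^2 / (2*\<delta>) + \<delta> / 2 * indicator S x" if "\<delta> > 0" for k x \<delta>
  proof (cases "x \<in> S")
    case True
    have "0 \<le> (\<bar>f k x\<bar> - \<delta>)^2" by simp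
    then have "2 * \<delta> * \<bar>f k x\<bar> \<le> (f k x)^2 + \<delta>^2" by (simp add: power2_eq_square algebra_simps)
    then show ?thesis using True that by (simp add: field_simps power2_eq_square)
  next
    case False then show ?thesis using z by simp
  qed
  have sqd: "integrable M (\<lambda>x. (f k x)^2 / (2*\<delta>) + \<delta> / 2 * indicator S x)" for k \<delta>
    by (intro Bochner_Integration.integrable_add Bochner_Integration.integrable_divide Bochner_Integration.integrable_mult_right fi Si)
  have absi: "integrable M (\<lambda>x. \<bar>f k x\<bar>)" for k
  proof (rule Bochner_Integration.integrable_bound[OF sqd[of k 1]])
    show "(\<lambda>x. \<bar>f k x\<bar>) \<in> borel_measurable M" by (rule borel_measurable_abs[OF fm])
    show "AE x in M. norm \<bar>f k x\<bar> \<le> norm ((f k x)^2 / (2*1) + 1 / 2 * indicator S x)"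
    proof (intro AE_I2)
      fix x
      have "\<bar>f k x\<bar> \<le> (f k x)^2 / (2*1) + 1 / 2 * indicator S x" using pw[of 1 k x] by simp
      then show "norm \<bar>f k x\<bar> \<le> norm ((f k x)^2 / (2*1) + 1 / 2 * indicator S x)" by simp
    qed
  qed
  then show "\<And>k. integrable M (\<lambda>x. \<bar>f k x\<bar>)" .
  define m where "m = measure M S"
  have m0: "0 \<le> m" by (simp add: m_def)
  have intS: "integral\<^sup>L M (indicator S :: 'a \<Rightarrow> real) = m" using S by (simp add: m_def)
  show "(\<lambda>k. integral\<^sup>L M (\<lambda>x. \<bar>f k x\<bar>)) \<longlonglongrightarrow> 0"
  proof (rule LIMSEQ_I)
    fix \<epsilon> :: real assume e: "0 < \<epsilon>"
    define \<delta> where "\<delta> = \<epsilon> / (m + 1)"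
    have d: "0 < \<delta>" "\<delta> * m < \<epsilon>" using e m0 by (auto simp: \<delta>_def field_simps)
    from LIMSEQ_D[OF lim, of "\<delta> * \<epsilon>"] d e obtain N where N: "\<And>k. k \<ge> N \<Longrightarrow> norm (integral\<^sup>L M (\<lambda>x. (f k x)^2) - 0) < \<delta> * \<epsilon>"
      by auto
    have "norm (integral\<^sup>L M (\<lambda>x. \<bar>f k x\<bar>) - 0) < \<epsilon>" if k: "k \<ge> N" for k
    proof -
      have "integral\<^sup>L M (\<lambda>x. \<bar>f k x\<bar>) \<le> integral\<^sup>L M (\<lambda>x. (f k x)^2 / (2*\<delta>) + \<delta> / 2 * indicator S x)"
        by (rule Bochner_Integration.integral_mono[OF absi sqd]) (use pw[OF d(1)] in auto)
      also have "\<dots> = integral\<^sup>L M (\<lambda>x. (f k x)^2) / (2*\<delta>) + \<delta> / 2 * m"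
        using Bochner_Integration.integral_add[OF Bochner_Integration.integrable_divide[OF fi[of k]] Bochner_Integration.integrable_mult_right[OF Si], of "2*\<delta>" "\<delta>/2"] intS by simp
      also have "integral\<^sup>L M (\<lambda>x. (f k x)^2) / (2*\<delta>) < \<epsilon> / 2"
        using N[OF k] d by (simp add: field_simps)
      also have "\<delta> / 2 * m < \<epsilon> / 2" using d by simp
      finally have "integral\<^sup>L M (\<lambda>x. \<bar>f k x\<bar>) < \<epsilon>" by simp
      moreover have "0 \<le> integral\<^sup>L M (\<lambda>x. \<bar>f k x\<bar>)" by simp
      ultimately show ?thesis by simp
    qed
    then show "\<exists>N. \<forall>k\<ge>N. norm (integral\<^sup>L M (\<lambda>x. \<bar>f k x\<bar>) - 0) < \<epsilon>" by blast
  qed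
qed



lemma sbm_borel:
  fixes f :: "'a::euclidean_space \<Rightarrow> 'b::euclidean_space"
  assumes "f \<in> borel_measurable borel"
  shows "set_borel_measurable lebesgue (ball 0 R) f"
proof -
  have "(\<lambda>x. indicator (ball (0::'a) R) x *\<^sub>R f x) \<in> borel_measurable borel"
    using assms by (intro borel_measurable_scaleR borel_measurable_indicator) auto
  then have "(\<lambda>x. indicator (ball (0::'a) R) x *\<^sub>R f x) \<in> borel_measurable lborel" by simp
  then show ?thesis unfolding set_borel_measurable_def by (rule measurable_completion)
qed

lemma L2_cont:
  fixes f :: "'a::euclidean_space \<Rightarrow> real"
  assumes c: "continuous_on UNIV f"
  shows "L2_on (ball 0 R) f"
proof -
  have fm: "f \<in> borel_measurable borel" using c by (rule borel_measurable_continuous_onI)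
  obtain B where B: "\<And>y. norm y \<le> R \<Longrightarrow> norm ((f y)^2) \<le> B"
    using cont_bounded[of "\<lambda>x. (f x)^2" R] c by (metis continuous_on_power)
  have "integrable lborel (\<lambda>x. indicator (ball (0::'a) R) x * (f x)^2)"
  proof (rule int_bm[where r=R and B=B])
    show "(\<lambda>x. indicator (ball (0::'a) R) x * (f x)^2) \<in> borel_measurable borel"
      by (intro borel_measurable_times borel_measurable_indicator borel_measurable_continuous_onI continuous_intros c) auto
    show "\<bar>indicator (ball 0 R) y * (f y)^2\<bar> \<le> B" if "norm y \<le> R" for y :: 'a
      using B[OF that] by (auto simp: indicator_def) (smt (verit) zero_le_power2)
    show "indicator (ball 0 R) x * (f x)^2 = 0" if "R \<le> norm x" for x :: 'a
      using that by (simp add: indicator_def)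
  qed
  then have "set_integrable lebesgue (ball 0 R) (\<lambda>x. (f x)^2)"
    by (intro sint_from_lborel) (auto intro: borel_measurable_continuous_onI continuous_intros c)
  then show ?thesis unfolding L2_on_def using sbm_borel[OF fm] by simp
qed

lemma L2v_cont:
  fixes G :: "'a::euclidean_space \<Rightarrow> 'a"
  assumes c: "continuous_on UNIV G"
  shows "L2v_on (ball 0 R) G"
proof -
  have fm: "G \<in> borel_measurable borel" using c by (rule borel_measurable_continuous_onI)
  have c2: "continuous_on UNIV (\<lambda>x. (norm (G x))^2)" using c by (intro continuous_intros)
  obtain B where B: "\<And>y. norm y \<le> R \<Longrightarrow> norm ((norm (G y))^2) \<le> B"
    using cont_bounded[OF c2, of R] by blast
  have "integrable lborel (\<lambda>x. indicator (ball (0::'a) R) x * (norm (G x))^2)"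
  proof (rule int_bm[where r=R and B=B])
    show "(\<lambda>x. indicator (ball (0::'a) R) x * (norm (G x))^2) \<in> borel_measurable borel"
      by (intro borel_measurable_times borel_measurable_indicator borel_measurable_continuous_onI c2) auto
    show "\<bar>indicator (ball 0 R) y * (norm (G y))^2\<bar> \<le> B" if "norm y \<le> R" for y :: 'a
      using B[OF that] by (auto simp: indicator_def) (smt (verit) zero_le_power2)
    show "indicator (ball 0 R) x * (norm (G x))^2 = 0" if "R \<le> norm x" for x :: 'a
      using that by (simp add: indicator_def)
  qed
  then have "set_integrable lebesgue (ball 0 R) (\<lambda>x. (norm (G x))^2)"
    by (intro sint_from_lborel) (use fm c2 borel_measurable_continuous_onI in auto)
  then show ?thesis unfolding L2v_on_def using sbm_borel[OF fm] by simp
qed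



locale profR = profb +
  fixes R :: real
  assumes Rpos: "R > 0" and a0: "0 < a" and adR: "a + d < R^2"
begin

lemma out_R: "R \<le> norm (x::'n::euclidean_space) \<Longrightarrow> a + d \<le> x \<bullet> x"
proof -
  assume "R \<le> norm x"
  then have "R^2 \<le> (norm x)^2" using Rpos by (intro power_mono) auto
  then show ?thesis using adR by (simp add: power2_norm_eq_inner)
qed

lemma v_zero: "R \<le> norm (x::'n::euclidean_space) \<Longrightarrow> v x = 0"
  using v_out out_R by blast
lemma Gv_zero: "R \<le> norm (x::'n::euclidean_space) \<Longrightarrow> Gv x = 0"
  using Gv_out out_R by blast

lemma test_v: "test_fun (ball 0 R) (v :: 'n::euclidean_space \<Rightarrow> real) Gv"
proof -
  define \<rho> where "\<rho> = sqrt (a + d)"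
  have "sqrt (a + d) < sqrt (R^2)" using adR by (simp only: real_sqrt_less_iff)
  then have \<rho>R: "\<rho> < R" unfolding \<rho>_def using Rpos by simp
  have sub: "{x::'n. v x \<noteq> 0} \<subseteq> cball 0 \<rho>"
  proof
    fix x :: 'n assume "x \<in> {x. v x \<noteq> 0}"
    then have "x \<bullet> x < a + d" using v_out by force
    then have "(norm x)^2 \<le> a + d" by (simp add: power2_norm_eq_inner)
    then have "norm x \<le> \<rho>" unfolding \<rho>_def by (simp add: real_le_rsqrt)
    then show "x \<in> cball 0 \<rho>" by simp
  qed
  have cl: "closure {x::'n. v x \<noteq> 0} \<subseteq> cball 0 \<rho>" by (rule closure_minimal[OF sub]) auto
  show ?thesis unfolding test_fun_def
  proof (intro conjI allI)
    show "(v has_derivative (\<lambda>y. Gv x \<bullet> y)) (at x)" for x by (rule v_deriv)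
    show "continuous_on UNIV (Gv :: 'n \<Rightarrow> 'n)" by (rule Gv_cont)
    show "compact (closure {x::'n. v x \<noteq> 0})"
      using cl by (meson bounded_cball bounded_subset closed_closure compact_eq_bounded_closed)
    show "closure {x::'n. v x \<noteq> 0} \<subseteq> ball 0 R" using cl \<rho>R by auto
  qed
qed

lemma weak_v: "weak_grad (ball 0 R) (v :: 'n::euclidean_space \<Rightarrow> real) Gv"
  unfolding weak_grad_def
proof (intro allI impI ballI)
  fix \<phi> :: "'n \<Rightarrow> real" and D\<phi> i
  assume tf: "test_fun (ball 0 R) \<phi> D\<phi>" and i: "i \<in> (Basis :: 'n set)"
  have pd: "(\<phi> has_derivative (\<lambda>y. D\<phi> x \<bullet> y)) (at x)" for x using tf by (simp add: test_fun_def)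
  have pc: "continuous_on UNIV \<phi>" by (rule test_cont[OF tf])
  have Dc: "continuous_on UNIV D\<phi>" using tf by (simp add: test_fun_def)
  define f1 where "f1 x = (Gv x \<bullet> i) * \<phi> x" for x
  define f2 where "f2 x = v x * (D\<phi> x \<bullet> i)" for x
  have c1: "continuous_on UNIV f1" unfolding f1_def[abs_def] by (intro continuous_intros Gv_cont pc)
  have c2: "continuous_on UNIV f2" unfolding f2_def[abs_def] by (intro continuous_intros v_cont Dc)
  have z1: "f1 x = 0" if "R \<le> norm x" for x using test_zero[OF tf that] by (simp add: f1_def)
  have z2: "f2 x = 0" if "R \<le> norm x" for x using v_zero[OF that] by (simp add: f2_def)
  obtain B1 where B1: "\<And>y. norm y \<le> R \<Longrightarrow> norm (f1 y) \<le> B1" using cont_bounded[OF c1] by blast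
  obtain B2 where B2: "\<And>y. norm y \<le> R \<Longrightarrow> norm (f2 y) \<le> B2" using cont_bounded[OF c2] by blast
  have m1: "f1 \<in> borel_measurable borel" by (rule borel_measurable_continuous_onI[OF c1])
  have m2: "f2 \<in> borel_measurable borel" by (rule borel_measurable_continuous_onI[OF c2])
  have i1: "integrable lborel f1" by (rule int_bm[OF m1, of R B1]) (use B1 z1 in auto)
  have i2: "integrable lborel f2" by (rule int_bm[OF m2, of R B2]) (use B2 z2 in auto)
  have cs: "continuous_on UNIV (\<lambda>x. f1 x + f2 x)" using c1 c2 by (intro continuous_intros)
  obtain B where B: "\<And>y. norm y \<le> R + 2 \<Longrightarrow> norm (f1 y + f2 y) \<le> B" using cont_bounded[OF cs] by blast
  have "integral\<^sup>L lborel (\<lambda>x. f1 x + f2 x) = 0"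
  proof (rule ibp0(2)[where G = "\<lambda>x. v x * \<phi> x" and e = i and r = R and B = B])
    show "continuous_on UNIV (\<lambda>x. v x * \<phi> x)" by (intro continuous_intros v_cont pc)
    show "((\<lambda>t. v (x + t *\<^sub>R i) * \<phi> (x + t *\<^sub>R i)) has_real_derivative f1 x + f2 x) (at 0)" for x
    proof -
      have "((\<lambda>x. v x * \<phi> x) has_derivative (\<lambda>y. v x * (D\<phi> x \<bullet> y) + (Gv x \<bullet> y) * \<phi> x)) (at x)"
        by (rule has_derivative_mult[OF v_deriv pd])
      from line_deriv[OF this, of i] show ?thesis by (simp add: f1_def f2_def add.commute)
    qed
    show "(\<lambda>x. f1 x + f2 x) \<in> borel_measurable borel" using m1 m2 by simp
    show "\<bar>f1 y + f2 y\<bar> \<le> B" if "norm y \<le> R + 2" for y using B[OF that] by simp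
    show "v x * \<phi> x = 0" if "R \<le> norm x" for x using v_zero[OF that] by simp
    show "norm i \<le> 1" using i by simp
    show "0 \<le> R" using Rpos by simp
  qed
  then have "integral\<^sup>L lborel f2 = - integral\<^sup>L lborel f1" using i1 i2 by simp
  moreover have "(LINT x:ball 0 R|lebesgue. v x * (D\<phi> x \<bullet> i)) = integral\<^sup>L lborel f2"
    unfolding f2_def[symmetric] by (rule lint_to_lborel[OF m2]) (use z2 in auto)
  moreover have "(LINT x:ball 0 R|lebesgue. (Gv x \<bullet> i) * \<phi> x) = integral\<^sup>L lborel f1"
    unfolding f1_def[symmetric] by (rule lint_to_lborel[OF m1]) (use z1 in auto)
  ultimately show "(LINT x:ball 0 R|lebesgue. v x * (D\<phi> x \<bullet> i)) = - (LINT x:ball 0 R|lebesgue. (Gv x \<bullet> i) * \<phi> x)"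
    by simp
qed

lemma H10_v: "H10 (ball 0 R) (v :: 'n::euclidean_space \<Rightarrow> real) Gv"
  unfolding H10_def
proof (intro conjI)
  show "L2_on (ball 0 R) (v :: 'n \<Rightarrow> real)" by (rule L2_cont[OF v_cont])
  show "L2v_on (ball 0 R) (Gv :: 'n \<Rightarrow> 'n)" by (rule L2v_cont[OF Gv_cont])
  show "weak_grad (ball 0 R) (v :: 'n \<Rightarrow> real) Gv" by (rule weak_v)
  show "\<exists>\<phi> D\<phi>. (\<forall>k::nat. test_fun (ball 0 R) (\<phi> k) (D\<phi> k)) \<and>
        (\<lambda>k. LINT x:ball 0 R|lebesgue. (\<phi> k x - (v :: 'n \<Rightarrow> real) x)\<^sup>2) \<longlonglongrightarrow> 0 \<and>
        (\<lambda>k. LINT x:ball 0 R|lebesgue. (norm (D\<phi> k x - Gv x))\<^sup>2) \<longlonglongrightarrow> 0"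
    by (rule exI[of _ "\<lambda>_. v"], rule exI[of _ "\<lambda>_. Gv"]) (simp add: test_v set_lebesgue_integral_def)
qed

end


context profR
begin

lemma F2sq_meas: "(\<lambda>x::'n::euclidean_space. F2 (x \<bullet> x)) \<in> borel_measurable borel"
proof -
  have "(\<lambda>x::'n. x \<bullet> x) \<in> borel_measurable borel" by (intro borel_measurable_continuous_onI continuous_intros)
  then show ?thesis using F2_meas by (rule measurable_compose)
qed

lemma K_nonneg: "0 \<le> K1" "0 \<le> K2" "0 \<le> K3"
  using sig dpos M_nonneg by (auto simp: K1_def K2_def K3_def)

lemma ibp_test:
  assumes tf: "test_fun (ball 0 R) \<psi> D\<psi>"
  shows "(LINT x:ball 0 R|lebesgue. Gv x \<bullet> D\<psi> x) = - (LINT x:ball 0 R|lebesgue. dv x * \<psi> (x::'n::euclidean_space))"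
proof -
  have pd: "(\<psi> has_derivative (\<lambda>y. D\<psi> x \<bullet> y)) (at x)" for x using tf by (simp add: test_fun_def)
  have pc: "continuous_on UNIV \<psi>" by (rule test_cont[OF tf])
  have Dc: "continuous_on UNIV D\<psi>" using tf by (simp add: test_fun_def)
  have pm: "\<psi> \<in> borel_measurable borel" by (rule borel_measurable_continuous_onI[OF pc])
  obtain B\<psi> where B\<psi>: "\<And>y. norm y \<le> R + 2 \<Longrightarrow> norm (\<psi> y) \<le> B\<psi>" using cont_bounded[OF pc] by blast
  define h2 where "h2 i x = 4 * F2 (x \<bullet> x) * (x \<bullet> i)^2 + 2 * F1 (x \<bullet> x)" for i x :: 'n
  define p1 where "p1 i x = (D\<psi> x \<bullet> i) * (Gv x \<bullet> i)" for i x :: 'n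
  define p2 where "p2 i x = \<psi> x * h2 i x" for i x :: 'n
  define Bh where "Bh = 4 * (K2 + K3) * (R + 2)^2 + 2 * K1"
  have h2b: "\<bar>h2 i y\<bar> \<le> Bh" if "norm y \<le> R + 2" "i \<in> Basis" for i y
  proof -
    have "(y \<bullet> i)^2 \<le> (R + 2)^2"
      using Basis_le_norm[OF that(2), of y] that(1) by (metis abs_le_square_iff order_trans abs_ge_zero abs_of_nonneg Rpos less_imp_le add_nonneg_nonneg zero_le_numeral abs_abs power2_abs)
    then have "4 * \<bar>F2 (y \<bullet> y)\<bar> * (y \<bullet> i)^2 \<le> 4 * (K2 + K3) * (R + 2)^2"
      using F2_bound[of "y \<bullet> y"] by (intro mult_mono) auto
    moreover have "\<bar>h2 i y\<bar> \<le> 4 * \<bar>F2 (y \<bullet> y)\<bar> * (y \<bullet> i)^2 + 2 * \<bar>F1 (y \<bullet> y)\<bar>"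
    proof -
      have "\<bar>h2 i y\<bar> \<le> \<bar>4 * F2 (y \<bullet> y) * (y \<bullet> i)^2\<bar> + \<bar>2 * F1 (y \<bullet> y)\<bar>"
        unfolding h2_def by (rule abs_triangle_ineq)
      also have "\<bar>4 * F2 (y \<bullet> y) * (y \<bullet> i)^2\<bar> = 4 * \<bar>F2 (y \<bullet> y)\<bar> * (y \<bullet> i)^2" by (simp add: abs_mult)
      finally show ?thesis by (simp add: abs_mult)
    qed
    ultimately show ?thesis using F1_bound[of "y \<bullet> y"] unfolding Bh_def by linarith
  qed
  have h2m: "h2 i \<in> borel_measurable borel" for i
  proof -
    have a: "(\<lambda>x::'n. (x \<bullet> i)^2) \<in> borel_measurable borel"
      by (intro borel_measurable_continuous_onI continuous_intros)
    have b: "(\<lambda>x::'n. F1 (x \<bullet> x)) \<in> borel_measurable borel"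
      by (intro borel_measurable_continuous_onI continuous_on_compose2[OF F1_cont] continuous_intros) auto
    have "(\<lambda>x::'n. 4 * F2 (x \<bullet> x) * (x \<bullet> i)^2 + 2 * F1 (x \<bullet> x)) \<in> borel_measurable borel"
      using a b F2sq_meas by measurable
    then show ?thesis unfolding h2_def[abs_def] .
  qed
  have p1c: "continuous_on UNIV (p1 i)" for i unfolding p1_def[abs_def] by (intro continuous_intros Dc Gv_cont)
  have p1m: "p1 i \<in> borel_measurable borel" for i by (rule borel_measurable_continuous_onI[OF p1c])
  have p2m: "p2 i \<in> borel_measurable borel" for i unfolding p2_def[abs_def] using pm h2m by (intro borel_measurable_times) auto
  have p1z: "p1 i x = 0" if "R \<le> norm x" for i x using Gv_zero[OF that] by (simp add: p1_def)
  have p2z: "p2 i x = 0" if "R \<le> norm x" for i x using test_zero[OF tf that] by (simp add: p2_def)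
  have p1i: "integrable lborel (p1 i)" for i
  proof -
    obtain B where B: "\<And>y. norm y \<le> R \<Longrightarrow> norm (p1 i y) \<le> B" using cont_bounded[OF p1c] by blast
    show ?thesis by (rule int_bm[OF p1m[of i], of R B]) (use B p1z in auto)
  qed
  have p2b: "\<bar>p2 i y\<bar> \<le> B\<psi> * Bh" if "norm y \<le> R + 2" "i \<in> Basis" for i y
    unfolding p2_def abs_mult using B\<psi>[OF that(1)] h2b[OF that] by (intro mult_mono) auto
  have p2i: "integrable lborel (p2 i)" if "i \<in> Basis" for i
    by (rule int_bm[OF p2m[of i], of R "B\<psi> * Bh"]) (use p2b[OF _ that] p2z in auto)
  have each: "integral\<^sup>L lborel (p1 i) = - integral\<^sup>L lborel (p2 i)" if i: "i \<in> Basis" for i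
  proof -
    have c1: "continuous_on UNIV (\<lambda>x. \<psi> x * (Gv x \<bullet> i))" by (intro continuous_intros pc Gv_cont)
    obtain B1 where B1: "\<And>y. norm y \<le> R + 2 \<Longrightarrow> norm (p1 i y) \<le> B1" using cont_bounded[OF p1c] by blast
    have "integral\<^sup>L lborel (\<lambda>x. p1 i x + p2 i x) = 0"
    proof (rule ibp0(2)[where G = "\<lambda>x. \<psi> x * (Gv x \<bullet> i)" and e = i and r = R and B = "B1 + B\<psi> * Bh"])
      show "continuous_on UNIV (\<lambda>x. \<psi> x * (Gv x \<bullet> i))" by (rule c1)
      show "((\<lambda>t. \<psi> (x + t *\<^sub>R i) * (Gv (x + t *\<^sub>R i) \<bullet> i)) has_real_derivative p1 i x + p2 i x) (at 0)" for x
      proof -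
        have "((\<lambda>x. \<psi> x * (Gv x \<bullet> i)) has_derivative
            (\<lambda>y. \<psi> x * (2 * (F2 (x \<bullet> x) * (x \<bullet> y + y \<bullet> x)) * (x \<bullet> i) + 2 * F1 (x \<bullet> x) * (y \<bullet> i)) + (D\<psi> x \<bullet> y) * (Gv x \<bullet> i))) (at x)"
          by (rule has_derivative_mult[OF pd Gi_deriv])
        from line_deriv[OF this, of i] show ?thesis using i
          by (simp add: p1_def p2_def h2_def inner_commute power2_eq_square algebra_simps)
      qed
      show "(\<lambda>x. p1 i x + p2 i x) \<in> borel_measurable borel" using p1m p2m by simp
      show "\<bar>p1 i y + p2 i y\<bar> \<le> B1 + B\<psi> * Bh" if "norm y \<le> R + 2" for y
        using B1[OF that] p2b[OF that i] by simp
      show "\<psi> x * (Gv x \<bullet> i) = 0" if "R \<le> norm x" for x using test_zero[OF tf that] by simp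
      show "norm i \<le> 1" using i by simp
      show "0 \<le> R" using Rpos by simp
    qed
    then show ?thesis using p1i p2i[OF i] by simp
  qed
  have s1: "(\<lambda>x. Gv x \<bullet> D\<psi> x) = (\<lambda>x. \<Sum>i\<in>Basis. p1 i x)"
  proof
    fix x
    have "Gv x \<bullet> D\<psi> x = (\<Sum>i\<in>Basis. (Gv x \<bullet> i) * (D\<psi> x \<bullet> i))" by (rule euclidean_inner)
    also have "\<dots> = (\<Sum>i\<in>Basis. p1 i x)" unfolding p1_def by (simp add: mult.commute)
    finally show "Gv x \<bullet> D\<psi> x = (\<Sum>i\<in>Basis. p1 i x)" .
  qed
  have s2: "(\<lambda>x. dv x * \<psi> x) = (\<lambda>x. \<Sum>i\<in>Basis. p2 i x)"
  proof
    fix x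
    show "dv x * \<psi> x = (\<Sum>i\<in>Basis. p2 i x)"
      unfolding p2_def h2_def dv_sum[of x] by (simp add: sum_distrib_left mult.commute)
  qed
  have "integral\<^sup>L lborel (\<lambda>x. Gv x \<bullet> D\<psi> x) = (\<Sum>i\<in>Basis. integral\<^sup>L lborel (p1 i))"
    unfolding s1 by (rule Bochner_Integration.integral_sum) (use p1i in auto)
  also have "\<dots> = (\<Sum>i\<in>Basis. - integral\<^sup>L lborel (p2 i))" using each by simp
  also have "\<dots> = - integral\<^sup>L lborel (\<lambda>x. dv x * \<psi> x)"
    unfolding s2 by (subst Bochner_Integration.integral_sum) (use p2i in \<open>auto simp: sum_negf\<close>)
  finally have main: "integral\<^sup>L lborel (\<lambda>x. Gv x \<bullet> D\<psi> x) = - integral\<^sup>L lborel (\<lambda>x. dv x * \<psi> x)" .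
  have m1: "(\<lambda>x. Gv x \<bullet> D\<psi> x) \<in> borel_measurable borel"
    by (intro borel_measurable_continuous_onI continuous_intros Gv_cont Dc)
  have m2: "(\<lambda>x. dv x * \<psi> x) \<in> borel_measurable borel" using dv_meas pm by (intro borel_measurable_times) auto
  have "(LINT x:ball 0 R|lebesgue. Gv x \<bullet> D\<psi> x) = integral\<^sup>L lborel (\<lambda>x. Gv x \<bullet> D\<psi> x)"
    by (rule lint_to_lborel[OF m1]) (simp add: Gv_zero)
  moreover have "(LINT x:ball 0 R|lebesgue. dv x * \<psi> x) = integral\<^sup>L lborel (\<lambda>x. dv x * \<psi> x)"
    by (rule lint_to_lborel[OF m2]) (simp add: test_zero[OF tf])
  ultimately show ?thesis using main by simp
qed

end


lemma ball_fin: "emeasure lebesgue (ball (0::'a::euclidean_space) R) < \<infinity>" "ball (0::'a) R \<in> sets lebesgue"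
  using lmeasurable_ball[of "0::'a" R] by (auto simp: fmeasurable_def)

lemma L2_int:
  fixes g :: "'a::euclidean_space \<Rightarrow> real"
  assumes m: "set_borel_measurable lebesgue S g" and i: "set_integrable lebesgue S (\<lambda>x. (g x)^2)"
    and S: "emeasure lebesgue S < \<infinity>" "S \<in> sets lebesgue"
  shows "set_integrable lebesgue S g"
  unfolding set_integrable_def
proof (rule Bochner_Integration.integrable_bound)
  have "integrable lebesgue (indicator S :: 'a \<Rightarrow> real)" using S by auto
  moreover have "integrable lebesgue (\<lambda>x. indicator S x * (g x)^2)" using i by (simp add: set_integrable_def)
  ultimately show "integrable lebesgue (\<lambda>x. (indicator S x + indicator S x * (g x)^2) / 2 :: real)"
    by auto
  show "(\<lambda>x. indicator S x *\<^sub>R g x) \<in> borel_measurable lebesgue" using m by (simp add: set_borel_measurable_def)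
  show "AE x in lebesgue. norm (indicator S x *\<^sub>R g x) \<le> norm ((indicator S x + indicator S x * (g x)^2) / 2 :: real)"
  proof (intro AE_I2)
    fix x
    have "2 * \<bar>g x\<bar> \<le> 1 + (g x)^2" using zero_le_power2[of "\<bar>g x\<bar> - 1"]
      by (simp add: power2_eq_square algebra_simps)
    then show "norm (indicator S x *\<^sub>R g x) \<le> norm ((indicator S x + indicator S x * (g x)^2) / 2 :: real)"
      by (auto simp: indicator_def)
  qed
qed



context profR
begin

lemma psi_inj: "inj_on (psi h) {0..<\<sigma>}"
proof (rule inj_onI)
  fix x y assume xy: "x \<in> {0..<\<sigma>}" "y \<in> {0..<\<sigma>}" "psi h x = psi h y"
  show "x = y"
  proof (rule ccontr)
    assume "x \<noteq> y"
    then consider "x < y" | "y < x" by linarith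
    then show False
    proof cases
      case 1 then show ?thesis using psi_strict[of x y] xy by auto
    next
      case 2 then show ?thesis using psi_strict[of y x] xy by auto
    qed
  qed
qed

definition "Kf s = (if a < s \<and> s < a + d then Ef h (w s) else 0) + (if a + d \<le> s then Ef h 0 else 0)"

lemma gfun_v: "gfun h \<sigma> (v x) = Kf (x \<bullet> x)"
proof -
  let ?s = "x \<bullet> x"
  consider "?s \<le> a" | "a < ?s \<and> ?s < a + d" | "a + d \<le> ?s" by linarith
  then show ?thesis
  proof cases
    case 1
    then show ?thesis using v_in[OF 1] dpos by (simp add: gfun_def Kf_def)
  next
    case 2
    have ws: "0 < w ?s" "w ?s < \<sigma>" using w_in 2 by auto
    have "psi h (w ?s) < psi h \<sigma>" using psi_strict[of "w ?s" \<sigma>] ws by auto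
    moreover have "the_inv_into {0..<\<sigma>} (psi h) (psi h (w ?s)) = w ?s"
      by (rule the_inv_into_f_f[OF psi_inj]) (use ws in auto)
    ultimately show ?thesis using 2 by (simp add: gfun_def Kf_def v_def F_def Ef_def)
  next
    case 3
    have v0: "v x = 0" using v_out[OF 3] .
    have "psi h 0 < psi h \<sigma>" using psi_strict[of 0 \<sigma>] sig by auto
    moreover have "the_inv_into {0..<\<sigma>} (psi h) (psi h 0) = 0"
      by (rule the_inv_into_f_f[OF psi_inj]) (use sig in auto)
    ultimately show ?thesis using 3 v0 psi_0 dpos by (simp add: gfun_def Kf_def Ef_def)
  qed
qed

lemma Kf_bounds: "0 \<le> Kf s" "Kf s \<le> 1"
proof -
  have e0: "0 < Ef h 0" "Ef h 0 \<le> 1" using E_pos E_le1[of 0] sig by auto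
  have e1: "a < s \<and> s < a + d \<Longrightarrow> 0 < Ef h (w s) \<and> Ef h (w s) \<le> 1"
    using E_pos E_le1[of "w s"] w_in[of s] by auto
  show "0 \<le> Kf s" "Kf s \<le> 1" unfolding Kf_def using e0 e1 dpos by (auto simp: less_imp_le)
qed

lemma Kf_meas: "(\<lambda>x::'n::euclidean_space. Kf (x \<bullet> x)) \<in> borel_measurable borel"
proof -
  have wA: "w ` {a<..<a+d} \<subseteq> {0<..<\<sigma>}" using w_in by auto
  have c1: "continuous_on {a<..<a+d} (\<lambda>s. Ef h (w s))"
    by (rule continuous_on_compose2[OF E_cont_open continuous_on_subset[OF w_cont] wA]) auto
  have m1: "(\<lambda>s. if s \<in> {a<..<a+d} then Ef h (w s) else 0) \<in> borel_measurable borel"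
    by (intro borel_measurable_continuous_on_if c1) auto
  have m2: "(\<lambda>s. Ef h 0 * indicator {a+d..} s) \<in> borel_measurable (borel :: real measure)"
    by (intro borel_measurable_times borel_measurable_indicator) auto
  have "Kf = (\<lambda>s. (if s \<in> {a<..<a+d} then Ef h (w s) else 0) + Ef h 0 * indicator {a+d..} s)"
    by (auto simp: Kf_def fun_eq_iff indicator_def)
  then have "Kf \<in> borel_measurable borel" using m1 m2 by simp
  moreover have "(\<lambda>x::'n. x \<bullet> x) \<in> borel_measurable borel" by (intro borel_measurable_continuous_onI continuous_intros)
  ultimately show ?thesis using measurable_compose by blast
qed

definition "Lam N = 2 * N * K1 + 4 * R^2 * K2 + 4 * R^2 * K3"

lemma Lam_nonneg: "0 \<le> N \<Longrightarrow> 0 \<le> Lam N" using K_nonneg by (simp add: Lam_def)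

lemma pointwise:
  assumes x: "x \<in> ball (0::'n::euclidean_space) R" and lam: "Lam (real DIM('n)) \<le> lam"
  shows "- dv x \<le> lam * gfun h \<sigma> (v x)"
proof -
  let ?s = "x \<bullet> x"
  have s0: "0 \<le> ?s" by simp
  have sR: "?s \<le> R^2" using x by (simp add: power2_norm_eq_inner[symmetric] power_mono less_imp_le)
  show ?thesis
  proof (cases "a < ?s \<and> ?s < a + d")
    case True
    have "- dv x \<le> (2 * real DIM('n) * K1 + 4 * R^2 * K2 + 4 * R^2 * K3) * Ef h (w ?s)"
      using key_ineq[of ?s "R^2" "real DIM('n)"] True s0 sR by (simp add: dv_def)
    also have "\<dots> \<le> lam * Ef h (w ?s)" using lam E_pos[of "w ?s"] unfolding Lam_def
      by (intro mult_right_mono) auto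
    also have "Ef h (w ?s) = gfun h \<sigma> (v x)" using gfun_v[of x] True by (simp add: Kf_def)
    finally show ?thesis .
  next
    case False
    have f2: "F2 ?s = 0" unfolding F2_def by (rule if_not_P[OF False])
    have f1: "F1 ?s = 0" using w1_out[OF False] by (simp add: F1_def)
    have "dv x = 0" by (simp add: dv_def f1 f2)
    moreover have "0 \<le> lam * gfun h \<sigma> (v x)" using gfun_v[of x] Kf_bounds Lam_nonneg[of "real DIM('n)"] lam by simp
    ultimately show ?thesis by simp
  qed
qed

end


lemma borel_leb: assumes "f \<in> borel_measurable borel" shows "f \<in> borel_measurable (lebesgue :: 'a::euclidean_space measure)"
proof -
  have "f \<in> lborel \<rightarrow>\<^sub>M borel" using assms by (simp only: measurable_lborel2)
  then show ?thesis by (rule measurable_completion)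
qed

lemma int_dom:
  fixes f g :: "'a \<Rightarrow> real"
  assumes "integrable M g" "f \<in> borel_measurable M" "\<And>x. \<bar>f x\<bar> \<le> g x"
  shows "integrable M f"
proof (rule Bochner_Integration.integrable_bound[OF assms(1,2)])
  show "AE x in M. norm (f x) \<le> norm (g x)"
  proof (intro AE_I2)
    fix x
    have "\<bar>f x\<bar> \<le> \<bar>g x\<bar>" using assms(3)[of x] abs_ge_self[of "g x"] by linarith
    then show "norm (f x) \<le> norm (g x)" by simp
  qed
qed

lemma sq_diff_le: "(norm (a - b :: 'a::real_normed_vector))^2 \<le> 2 * (norm a)^2 + 2 * (norm b)^2"
proof -
  have "norm (a - b) \<le> norm a + norm b" by (rule norm_triangle_ineq4)
  then have "(norm (a - b))^2 \<le> (norm a + norm b)^2" by (intro power_mono) auto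
  also have "\<dots> \<le> 2 * (norm a)^2 + 2 * (norm b)^2"
    using zero_le_power2[of "norm a - norm b"] by (simp add: power2_eq_square algebra_simps)
  finally show ?thesis .
qed



lemma sli: "(LINT x:S|M. f x) = integral\<^sup>L M (\<lambda>x. indicator S x * f x)" for f :: "'a \<Rightarrow> real"
  by (simp add: set_lebesgue_integral_def)

context profR
begin

lemma subsol:
  fixes \<phi> :: "'n::euclidean_space \<Rightarrow> real" and G\<phi> :: "'n \<Rightarrow> 'n"
  assumes H: "H10 (ball 0 R) \<phi> G\<phi>" and pos: "\<forall>x\<in>ball 0 R. \<phi> x \<ge> 0"
    and lam: "Lam (real DIM('n)) \<le> lam"
  shows "(LINT x:ball 0 R|lebesgue. Gv x \<bullet> G\<phi> x) \<le> lam * (LINT x:ball 0 R|lebesgue. gfun h \<sigma> (v x) * \<phi> x)"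
proof -
  define \<Omega> where "\<Omega> = ball (0::'n) R"
  define ind where "ind = (indicator \<Omega> :: 'n \<Rightarrow> real)"
  have ind01: "ind x = 0 \<or> ind x = 1" for x by (simp add: ind_def indicator_def)
  have Om: "emeasure lebesgue \<Omega> < \<infinity>" "\<Omega> \<in> sets lebesgue" unfolding \<Omega>_def by (rule ball_fin)+
  from H obtain \<psi> D\<psi> where L2\<phi>: "L2_on \<Omega> \<phi>" and L2G: "L2v_on \<Omega> G\<phi>"
    and tf: "\<And>k. test_fun \<Omega> (\<psi> k) (D\<psi> k)"
    and lim1: "(\<lambda>k. LINT x:\<Omega>|lebesgue. (\<psi> k x - \<phi> x)^2) \<longlonglongrightarrow> 0"
    and lim2: "(\<lambda>k. LINT x:\<Omega>|lebesgue. (norm (D\<psi> k x - G\<phi> x))^2) \<longlonglongrightarrow> 0"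
    unfolding H10_def \<Omega>_def by blast
  have \<phi>m: "(\<lambda>x. ind x * \<phi> x) \<in> borel_measurable lebesgue"
    using L2\<phi> by (simp add: L2_on_def set_borel_measurable_def ind_def)
  have \<phi>i: "integrable lebesgue (\<lambda>x. ind x * \<phi> x)"
    using L2_int[of \<Omega> \<phi>] L2\<phi> Om by (simp add: L2_on_def set_integrable_def ind_def)
  have Gm: "(\<lambda>x. ind x *\<^sub>R G\<phi> x) \<in> borel_measurable lebesgue"
    using L2G by (simp add: L2v_on_def set_borel_measurable_def ind_def)
  have Gsq: "integrable lebesgue (\<lambda>x. ind x * (norm (G\<phi> x))^2)"
    using L2G by (simp add: L2v_on_def set_integrable_def ind_def)
  have nGi: "integrable lebesgue (\<lambda>x. ind x * norm (G\<phi> x))"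
  proof -
    have "(\<lambda>x. ind x *\<^sub>R norm (G\<phi> x)) = (\<lambda>x. norm (ind x *\<^sub>R G\<phi> x))"
      by (auto simp: fun_eq_iff ind_def indicator_def)
    then have "set_borel_measurable lebesgue \<Omega> (\<lambda>x. norm (G\<phi> x))"
      using measurable_compose[OF Gm borel_measurable_norm] by (simp add: set_borel_measurable_def ind_def)
    then show ?thesis using L2_int[of \<Omega> "\<lambda>x. norm (G\<phi> x)"] L2G Om
      by (simp add: L2v_on_def set_integrable_def ind_def)
  qed
  have \<phi>sq: "integrable lebesgue (\<lambda>x. ind x * (\<phi> x)^2)"
    using L2\<phi> by (simp add: L2_on_def set_integrable_def ind_def)
  have \<psi>c: "continuous_on UNIV (\<psi> k)" for k by (rule test_cont[OF tf])
  have D\<psi>c: "continuous_on UNIV (D\<psi> k)" for k using tf[of k] by (simp add: test_fun_def)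
  have \<psi>m: "(\<lambda>x. ind x * \<psi> k x) \<in> borel_measurable lebesgue" for k
    using sbm_borel[OF borel_measurable_continuous_onI[OF \<psi>c], of R] by (simp add: set_borel_measurable_def ind_def \<Omega>_def)
  have \<psi>sq: "integrable lebesgue (\<lambda>x. ind x * (\<psi> k x)^2)" for k
    using L2_cont[OF \<psi>c, of R] by (simp add: L2_on_def set_integrable_def ind_def \<Omega>_def)
  have \<psi>i: "integrable lebesgue (\<lambda>x. ind x * \<psi> k x)" for k
    using L2_int[of \<Omega> "\<psi> k"] L2_cont[OF \<psi>c, of R] Om by (simp add: L2_on_def set_integrable_def ind_def \<Omega>_def)
  have Dm: "(\<lambda>x. ind x *\<^sub>R D\<psi> k x) \<in> borel_measurable lebesgue" for k
    using sbm_borel[OF borel_measurable_continuous_onI[OF D\<psi>c], of R] by (simp add: set_borel_measurable_def ind_def \<Omega>_def)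
  have Dsq: "integrable lebesgue (\<lambda>x. ind x * (norm (D\<psi> k x))^2)" for k
    using L2v_cont[OF D\<psi>c, of R] by (simp add: L2v_on_def set_integrable_def ind_def \<Omega>_def)
  have nDi: "integrable lebesgue (\<lambda>x. ind x * norm (D\<psi> k x))" for k
  proof -
    have c: "continuous_on UNIV (\<lambda>x. norm (D\<psi> k x))" using D\<psi>c by (intro continuous_intros)
    show ?thesis using L2_int[of \<Omega> "\<lambda>x. norm (D\<psi> k x)"] L2_cont[OF c, of R] Om
      by (simp add: L2_on_def set_integrable_def ind_def \<Omega>_def)
  qed
  define BG where "BG = 2 * K1 * R"
  have BG: "norm (Gv x) \<le> BG" if "x \<in> \<Omega>" for x
    using Gv_bound[of x] that K_nonneg Rpos unfolding BG_def \<Omega>_def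
    by (smt (verit) mem_ball_0 mult_left_mono mult_nonneg_nonneg)
  have BG0: "0 \<le> BG" using K_nonneg Rpos by (simp add: BG_def)
  define BD where "BD = 2 * real DIM('n) * K1 + 4 * R^2 * (K2 + K3)"
  have BD: "\<bar>dv x\<bar> \<le> BD" if "x \<in> \<Omega>" for x
  proof -
    have "x \<bullet> x \<le> R^2" using that unfolding \<Omega>_def
      by (simp add: power2_norm_eq_inner[symmetric] power_mono less_imp_le)
    then have "4 * (x \<bullet> x) * (K2 + K3) \<le> 4 * R^2 * (K2 + K3)" using K_nonneg by (intro mult_right_mono) auto
    then show ?thesis using dv_bound[of x] unfolding BD_def by linarith
  qed
  have BD0: "0 \<le> BD" using K_nonneg by (simp add: BD_def)
  have Gvl: "Gv \<in> borel_measurable lebesgue" by (rule borel_leb[OF borel_measurable_continuous_onI[OF Gv_cont]])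
  have dvl: "dv \<in> borel_measurable lebesgue" by (rule borel_leb[OF dv_meas])
  define e where "e k x = ind x * norm (D\<psi> k x - G\<phi> x)" for k x
  have em: "e k \<in> borel_measurable lebesgue" for k
  proof -
    have "e k = (\<lambda>x. norm (ind x *\<^sub>R D\<psi> k x - ind x *\<^sub>R G\<phi> x))"
      by (auto simp: fun_eq_iff e_def ind_def indicator_def)
    then show ?thesis using measurable_compose[OF borel_measurable_diff[OF Dm Gm] borel_measurable_norm] by simp
  qed
  have esq: "integrable lebesgue (\<lambda>x. (e k x)^2)" for k
  proof (rule int_dom)
    show "integrable lebesgue (\<lambda>x. 2 * (ind x * (norm (D\<psi> k x))^2) + 2 * (ind x * (norm (G\<phi> x))^2))"
      using Dsq[of k] Gsq by auto
    show "(\<lambda>x. (e k x)^2) \<in> borel_measurable lebesgue" using em[of k] by (rule borel_measurable_power)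
    show "\<bar>(e k x)^2\<bar> \<le> 2 * (ind x * (norm (D\<psi> k x))^2) + 2 * (ind x * (norm (G\<phi> x))^2)" for x
      using sq_diff_le[of "D\<psi> k x" "G\<phi> x"] by (auto simp: e_def ind_def indicator_def)
  qed
  have elim: "(\<lambda>k. integral\<^sup>L lebesgue (\<lambda>x. (e k x)^2)) \<longlonglongrightarrow> 0"
  proof -
    have "(\<lambda>x. (e k x)^2) = (\<lambda>x. indicator \<Omega> x * (norm (D\<psi> k x - G\<phi> x))^2)" for k
      by (auto simp: fun_eq_iff e_def ind_def indicator_def)
    then show ?thesis using lim2 by (simp add: sli)
  qed
  have ez: "x \<notin> \<Omega> \<Longrightarrow> e k x = 0" for k x by (simp add: e_def ind_def)
  have eabs: "(\<lambda>k. integral\<^sup>L lebesgue (\<lambda>x. \<bar>e k x\<bar>)) \<longlonglongrightarrow> 0" "integrable lebesgue (\<lambda>x. \<bar>e k x\<bar>)" for k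
    using L2_L1[OF em esq elim Om(2) Om(1) ez] by auto
  have A1: "integrable lebesgue (\<lambda>x. ind x * (Gv x \<bullet> G\<phi> x))"
  proof (rule int_dom)
    show "integrable lebesgue (\<lambda>x. BG * (ind x * norm (G\<phi> x)))" using nGi by auto
    have "(\<lambda>x. ind x * (Gv x \<bullet> G\<phi> x)) = (\<lambda>x. Gv x \<bullet> (ind x *\<^sub>R G\<phi> x))" by (simp add: fun_eq_iff)
    then show "(\<lambda>x. ind x * (Gv x \<bullet> G\<phi> x)) \<in> borel_measurable lebesgue"
      using borel_measurable_inner[OF Gvl Gm] by simp
    show "\<bar>ind x * (Gv x \<bullet> G\<phi> x)\<bar> \<le> BG * (ind x * norm (G\<phi> x))" for x
    proof (cases "x \<in> \<Omega>")
      case True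
      have "\<bar>Gv x \<bullet> G\<phi> x\<bar> \<le> norm (Gv x) * norm (G\<phi> x)" by (rule Cauchy_Schwarz_ineq2)
      also have "\<dots> \<le> BG * norm (G\<phi> x)" using BG[OF True] by (intro mult_right_mono) auto
      finally show ?thesis using True by (simp add: ind_def)
    qed (simp add: ind_def)
  qed
  have A2: "integrable lebesgue (\<lambda>x. ind x * (Gv x \<bullet> D\<psi> k x))" for k
  proof (rule int_dom)
    show "integrable lebesgue (\<lambda>x. BG * (ind x * norm (D\<psi> k x)))" using nDi[of k] by auto
    have "(\<lambda>x. ind x * (Gv x \<bullet> D\<psi> k x)) = (\<lambda>x. Gv x \<bullet> (ind x *\<^sub>R D\<psi> k x))" by (simp add: fun_eq_iff)
    then show "(\<lambda>x. ind x * (Gv x \<bullet> D\<psi> k x)) \<in> borel_measurable lebesgue"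
      using borel_measurable_inner[OF Gvl Dm[of k]] by simp
    show "\<bar>ind x * (Gv x \<bullet> D\<psi> k x)\<bar> \<le> BG * (ind x * norm (D\<psi> k x))" for x
    proof (cases "x \<in> \<Omega>")
      case True
      have "\<bar>Gv x \<bullet> D\<psi> k x\<bar> \<le> norm (Gv x) * norm (D\<psi> k x)" by (rule Cauchy_Schwarz_ineq2)
      also have "\<dots> \<le> BG * norm (D\<psi> k x)" using BG[OF True] by (intro mult_right_mono) auto
      finally show ?thesis using True by (simp add: ind_def)
    qed (simp add: ind_def)
  qed
  have limA: "(\<lambda>k. LINT x:\<Omega>|lebesgue. Gv x \<bullet> D\<psi> k x) \<longlonglongrightarrow> (LINT x:\<Omega>|lebesgue. Gv x \<bullet> G\<phi> x)"
  proof -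
    have bnd: "norm ((LINT x:\<Omega>|lebesgue. Gv x \<bullet> D\<psi> k x) - (LINT x:\<Omega>|lebesgue. Gv x \<bullet> G\<phi> x))
        \<le> BG * integral\<^sup>L lebesgue (\<lambda>x. \<bar>e k x\<bar>)" for k
    proof -
      have "(LINT x:\<Omega>|lebesgue. Gv x \<bullet> D\<psi> k x) - (LINT x:\<Omega>|lebesgue. Gv x \<bullet> G\<phi> x)
          = integral\<^sup>L lebesgue (\<lambda>x. ind x * (Gv x \<bullet> D\<psi> k x) - ind x * (Gv x \<bullet> G\<phi> x))"
        using A1 A2[of k] by (simp add: sli ind_def)
      also have "\<bar>\<dots>\<bar> \<le> integral\<^sup>L lebesgue (\<lambda>x. BG * \<bar>e k x\<bar>)"
      proof (rule integral_abs_bound_integral)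
        show "integrable lebesgue (\<lambda>x. ind x * (Gv x \<bullet> D\<psi> k x) - ind x * (Gv x \<bullet> G\<phi> x))"
          using A1 A2[of k] by auto
        show "integrable lebesgue (\<lambda>x. BG * \<bar>e k x\<bar>)" using eabs(2)[of k] by auto
        fix x
        show "\<bar>ind x * (Gv x \<bullet> D\<psi> k x) - ind x * (Gv x \<bullet> G\<phi> x)\<bar> \<le> BG * \<bar>e k x\<bar>"
        proof (cases "x \<in> \<Omega>")
          case True
          have "\<bar>Gv x \<bullet> (D\<psi> k x - G\<phi> x)\<bar> \<le> norm (Gv x) * norm (D\<psi> k x - G\<phi> x)" by (rule Cauchy_Schwarz_ineq2)
          also have "\<dots> \<le> BG * norm (D\<psi> k x - G\<phi> x)" using BG[OF True] by (intro mult_right_mono) auto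
          finally show ?thesis using True by (simp add: ind_def e_def inner_diff_right)
        qed (simp add: ind_def e_def BG0)
      qed
      also have "\<dots> = BG * integral\<^sup>L lebesgue (\<lambda>x. \<bar>e k x\<bar>)" by simp
      finally show ?thesis by simp
    qed
    have "(\<lambda>k. BG * integral\<^sup>L lebesgue (\<lambda>x. \<bar>e k x\<bar>)) \<longlonglongrightarrow> 0"
      using tendsto_mult_right_zero[OF eabs(1)] by simp
    then have "(\<lambda>k. (LINT x:\<Omega>|lebesgue. Gv x \<bullet> D\<psi> k x) - (LINT x:\<Omega>|lebesgue. Gv x \<bullet> G\<phi> x)) \<longlonglongrightarrow> 0"
      by (rule Lim_null_comparison[rotated]) (use bnd in \<open>auto intro: always_eventually\<close>)
    then show ?thesis by (simp add: LIM_zero_iff)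
  qed
  define f where "f k x = ind x * (\<psi> k x - \<phi> x)" for k x
  have fm: "f k \<in> borel_measurable lebesgue" for k
  proof -
    have "f k = (\<lambda>x. ind x * \<psi> k x - ind x * \<phi> x)" by (auto simp: fun_eq_iff f_def algebra_simps)
    then show ?thesis using borel_measurable_diff[OF \<psi>m[of k] \<phi>m] by simp
  qed
  have fsq: "integrable lebesgue (\<lambda>x. (f k x)^2)" for k
  proof (rule int_dom)
    show "integrable lebesgue (\<lambda>x. 2 * (ind x * (\<psi> k x)^2) + 2 * (ind x * (\<phi> x)^2))"
      using \<psi>sq[of k] \<phi>sq by auto
    show "(\<lambda>x. (f k x)^2) \<in> borel_measurable lebesgue" using fm[of k] by (rule borel_measurable_power)
    show "\<bar>(f k x)^2\<bar> \<le> 2 * (ind x * (\<psi> k x)^2) + 2 * (ind x * (\<phi> x)^2)" for x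
      using sq_diff_le[of "\<psi> k x" "\<phi> x"] by (auto simp: f_def ind_def indicator_def)
  qed
  have flim: "(\<lambda>k. integral\<^sup>L lebesgue (\<lambda>x. (f k x)^2)) \<longlonglongrightarrow> 0"
  proof -
    have "(\<lambda>x. (f k x)^2) = (\<lambda>x. indicator \<Omega> x * (\<psi> k x - \<phi> x)^2)" for k
      by (auto simp: fun_eq_iff f_def ind_def indicator_def)
    then show ?thesis using lim1 by (simp add: sli)
  qed
  have fz: "x \<notin> \<Omega> \<Longrightarrow> f k x = 0" for k x by (simp add: f_def ind_def)
  have fabs: "(\<lambda>k. integral\<^sup>L lebesgue (\<lambda>x. \<bar>f k x\<bar>)) \<longlonglongrightarrow> 0" "integrable lebesgue (\<lambda>x. \<bar>f k x\<bar>)" for k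
    using L2_L1[OF fm fsq flim Om(2) Om(1) fz] by auto
  have B0: "integrable lebesgue (\<lambda>x. ind x * (dv x * \<phi> x))"
  proof (rule int_dom)
    show "integrable lebesgue (\<lambda>x. BD * \<bar>ind x * \<phi> x\<bar>)" using \<phi>i by auto
    show "(\<lambda>x. ind x * (dv x * \<phi> x)) \<in> borel_measurable lebesgue"
      using borel_measurable_times[OF dvl \<phi>m] by (simp add: mult_ac)
    show "\<bar>ind x * (dv x * \<phi> x)\<bar> \<le> BD * \<bar>ind x * \<phi> x\<bar>" for x
      using BD[of x] by (cases "x \<in> \<Omega>") (auto simp: ind_def abs_mult mult_right_mono)
  qed
  have B1: "integrable lebesgue (\<lambda>x. ind x * (dv x * \<psi> k x))" for k
  proof (rule int_dom)
    show "integrable lebesgue (\<lambda>x. BD * \<bar>ind x * \<psi> k x\<bar>)" using \<psi>i[of k] by auto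
    show "(\<lambda>x. ind x * (dv x * \<psi> k x)) \<in> borel_measurable lebesgue"
      using borel_measurable_times[OF dvl \<psi>m[of k]] by (simp add: mult_ac)
    show "\<bar>ind x * (dv x * \<psi> k x)\<bar> \<le> BD * \<bar>ind x * \<psi> k x\<bar>" for x
      using BD[of x] by (cases "x \<in> \<Omega>") (auto simp: ind_def abs_mult mult_right_mono)
  qed
  have limB: "(\<lambda>k. LINT x:\<Omega>|lebesgue. dv x * \<psi> k x) \<longlonglongrightarrow> (LINT x:\<Omega>|lebesgue. dv x * \<phi> x)"
  proof -
    have bnd: "norm ((LINT x:\<Omega>|lebesgue. dv x * \<psi> k x) - (LINT x:\<Omega>|lebesgue. dv x * \<phi> x))
        \<le> BD * integral\<^sup>L lebesgue (\<lambda>x. \<bar>f k x\<bar>)" for k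
    proof -
      have "(LINT x:\<Omega>|lebesgue. dv x * \<psi> k x) - (LINT x:\<Omega>|lebesgue. dv x * \<phi> x)
          = integral\<^sup>L lebesgue (\<lambda>x. ind x * (dv x * \<psi> k x) - ind x * (dv x * \<phi> x))"
        using B0 B1[of k] by (simp add: sli ind_def)
      also have "\<bar>\<dots>\<bar> \<le> integral\<^sup>L lebesgue (\<lambda>x. BD * \<bar>f k x\<bar>)"
      proof (rule integral_abs_bound_integral)
        show "integrable lebesgue (\<lambda>x. ind x * (dv x * \<psi> k x) - ind x * (dv x * \<phi> x))"
          using B0 B1[of k] by auto
        show "integrable lebesgue (\<lambda>x. BD * \<bar>f k x\<bar>)" using fabs(2)[of k] by auto
        fix x
        show "\<bar>ind x * (dv x * \<psi> k x) - ind x * (dv x * \<phi> x)\<bar> \<le> BD * \<bar>f k x\<bar>"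
        proof (cases "x \<in> \<Omega>")
          case True
          have "\<bar>dv x * (\<psi> k x - \<phi> x)\<bar> \<le> BD * \<bar>\<psi> k x - \<phi> x\<bar>"
            using BD[OF True] by (simp add: abs_mult mult_right_mono)
          then show ?thesis using True by (simp add: ind_def f_def algebra_simps)
        qed (simp add: ind_def f_def)
      qed
      also have "\<dots> = BD * integral\<^sup>L lebesgue (\<lambda>x. \<bar>f k x\<bar>)" by simp
      finally show ?thesis by simp
    qed
    have "(\<lambda>k. BD * integral\<^sup>L lebesgue (\<lambda>x. \<bar>f k x\<bar>)) \<longlonglongrightarrow> 0"
      using tendsto_mult_right_zero[OF fabs(1)] by simp
    then have "(\<lambda>k. (LINT x:\<Omega>|lebesgue. dv x * \<psi> k x) - (LINT x:\<Omega>|lebesgue. dv x * \<phi> x)) \<longlonglongrightarrow> 0"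
      by (rule Lim_null_comparison[rotated]) (use bnd in \<open>auto intro: always_eventually\<close>)
    then show ?thesis by (simp add: LIM_zero_iff)
  qed
  have eqk: "(LINT x:\<Omega>|lebesgue. Gv x \<bullet> D\<psi> k x) = - (LINT x:\<Omega>|lebesgue. dv x * \<psi> k x)" for k
    using ibp_test[of "\<psi> k" "D\<psi> k"] tf[of k] unfolding \<Omega>_def by simp
  have "(\<lambda>k. - (LINT x:\<Omega>|lebesgue. dv x * \<psi> k x)) \<longlonglongrightarrow> (LINT x:\<Omega>|lebesgue. Gv x \<bullet> G\<phi> x)"
    using limA unfolding eqk .
  moreover have "(\<lambda>k. - (LINT x:\<Omega>|lebesgue. dv x * \<psi> k x)) \<longlonglongrightarrow> - (LINT x:\<Omega>|lebesgue. dv x * \<phi> x)"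
    by (rule tendsto_minus[OF limB])
  ultimately have eqC: "(LINT x:\<Omega>|lebesgue. Gv x \<bullet> G\<phi> x) = - (LINT x:\<Omega>|lebesgue. dv x * \<phi> x)"
    by (rule LIMSEQ_unique)
  have gm: "(\<lambda>x. ind x * (gfun h \<sigma> (v x) * \<phi> x)) \<in> borel_measurable lebesgue"
  proof -
    have "(\<lambda>x. ind x * (gfun h \<sigma> (v x) * \<phi> x)) = (\<lambda>x. Kf (x \<bullet> x) * (ind x * \<phi> x))"
      by (simp add: fun_eq_iff gfun_v mult_ac)
    then show ?thesis using borel_measurable_times[OF borel_leb[OF Kf_meas] \<phi>m] by simp
  qed
  have gi: "integrable lebesgue (\<lambda>x. ind x * (gfun h \<sigma> (v x) * \<phi> x))"
  proof (rule int_dom[OF _ gm])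
    show "integrable lebesgue (\<lambda>x. \<bar>ind x * \<phi> x\<bar>)" using \<phi>i by auto
    show "\<bar>ind x * (gfun h \<sigma> (v x) * \<phi> x)\<bar> \<le> \<bar>ind x * \<phi> x\<bar>" for x
    proof -
      have k: "0 \<le> Kf (x \<bullet> x)" "Kf (x \<bullet> x) \<le> 1" by (rule Kf_bounds)+
      have "\<bar>ind x * (gfun h \<sigma> (v x) * \<phi> x)\<bar> = Kf (x \<bullet> x) * \<bar>ind x * \<phi> x\<bar>"
        using k(1) gfun_v[of x] by (simp add: abs_mult mult_ac)
      then show ?thesis using k mult_left_le_one_le[of "\<bar>ind x * \<phi> x\<bar>" "Kf (x \<bullet> x)"] by simp
    qed
  qed
  have "- (LINT x:\<Omega>|lebesgue. dv x * \<phi> x) = integral\<^sup>L lebesgue (\<lambda>x. - (ind x * (dv x * \<phi> x)))"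
    by (simp add: sli ind_def)
  also have "\<dots> \<le> integral\<^sup>L lebesgue (\<lambda>x. lam * (ind x * (gfun h \<sigma> (v x) * \<phi> x)))"
  proof (rule integral_mono)
    show "integrable lebesgue (\<lambda>x. - (ind x * (dv x * \<phi> x)))" using B0 by auto
    show "integrable lebesgue (\<lambda>x. lam * (ind x * (gfun h \<sigma> (v x) * \<phi> x)))" using gi by auto
    fix x
    show "- (ind x * (dv x * \<phi> x)) \<le> lam * (ind x * (gfun h \<sigma> (v x) * \<phi> x))"
    proof (cases "x \<in> \<Omega>")
      case True
      have "- dv x * \<phi> x \<le> lam * gfun h \<sigma> (v x) * \<phi> x"
        using pointwise[of x lam] True lam pos unfolding \<Omega>_def by (intro mult_right_mono) auto
      then show ?thesis using True by (simp add: ind_def mult_ac)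
    qed (simp add: ind_def)
  qed
  also have "\<dots> = lam * (LINT x:\<Omega>|lebesgue. gfun h \<sigma> (v x) * \<phi> x)" by (simp add: sli ind_def)
  finally show ?thesis using eqC unfolding \<Omega>_def by simp
qed

end


lemma hM_exists:
  fixes h :: "real \<Rightarrow> real" and \<sigma> \<gamma> C :: real
  assumes sig: "\<sigma> > 0" and hc: "continuous_on {0..<\<sigma>} h" and hp: "\<forall>s\<in>{0..<\<sigma>}. h s > 0"
    and g0: "0 \<le> \<gamma>"
    and lim: "((\<lambda>s. (\<sigma> - s) powr \<gamma> * h s) \<longlongrightarrow> C) (at_left \<sigma>)"
  shows "\<exists>M. \<forall>t\<in>{0..<\<sigma>}. h t * (\<sigma> - t) powr \<gamma> \<le> M"
proof -
  have "eventually (\<lambda>s. (\<sigma> - s) powr \<gamma> * h s < C + 1) (at_left \<sigma>)"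
    using order_tendstoD(2)[OF lim, of "C + 1"] by simp
  then obtain b where b: "b < \<sigma>" "\<And>y. b < y \<Longrightarrow> y < \<sigma> \<Longrightarrow> (\<sigma> - y) powr \<gamma> * h y < C + 1"
    unfolding eventually_at_left_field by blast
  define b' where "b' = max b 0"
  have b': "b' < \<sigma>" "0 \<le> b'" using b sig by (auto simp: b'_def)
  have "compact (h ` {0..b'})"
    by (rule compact_continuous_image[OF continuous_on_subset[OF hc]]) (use b' in auto)
  then obtain Bh where Bh: "\<forall>z\<in>h ` {0..b'}. norm z \<le> Bh" using compact_imp_bounded bounded_iff by metis
  show ?thesis
  proof (intro exI[of _ "max (Bh * \<sigma> powr \<gamma>) (C + 1)"] ballI)
    fix t assume t: "t \<in> {0..<\<sigma>}"
    show "h t * (\<sigma> - t) powr \<gamma> \<le> max (Bh * \<sigma> powr \<gamma>) (C + 1)"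
    proof (cases "t \<le> b'")
      case True
      have "\<bar>h t\<bar> \<le> Bh" using Bh t True by auto
      then have "h t \<le> Bh" by linarith
      moreover have "(\<sigma> - t) powr \<gamma> \<le> \<sigma> powr \<gamma>" using t g0 by (intro powr_mono2) auto
      moreover have "0 \<le> h t" using hp t by (auto intro: less_imp_le)
      ultimately have "h t * (\<sigma> - t) powr \<gamma> \<le> Bh * \<sigma> powr \<gamma>" by (intro mult_mono) auto
      then show ?thesis by linarith
    next
      case False
      then have "b < t" by (simp add: b'_def)
      then have "(\<sigma> - t) powr \<gamma> * h t < C + 1" using b(2)[of t] t by auto
      then show ?thesis by (simp add: mult.commute)
    qed
  qed
qed

theorem theorem4p6:
  fixes h :: "real \<Rightarrow> real" and \<sigma> \<gamma> C R :: real
  assumes "\<sigma> > 0"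
    and "continuous_on {0..<\<sigma>} h"
    and "strict_mono_on {0..<\<sigma>} h"
    and "\<forall>s\<in>{0..<\<sigma>}. h s > 0"
    and "filterlim h at_top (at_left \<sigma>)"
    and "1 \<le> \<gamma>" and "\<gamma> < 2" and "C > 0"
    and "((\<lambda>s. (\<sigma> - s) powr \<gamma> * h s) \<longlongrightarrow> C) (at_left \<sigma>)"
    and "R > 0"
  shows "\<exists>lam0. \<forall>lam\<ge>lam0. \<exists>(v :: 'n::euclidean_space \<Rightarrow> real) Gv.
           H10 (ball 0 R) v Gv \<and>
           (\<forall>x\<in>ball 0 R. 0 \<le> v x \<and> v x \<le> psi h \<sigma>) \<and>
           (\<forall>\<phi> G\<phi>. H10 (ball 0 R) \<phi> G\<phi> \<and> (\<forall>x\<in>ball 0 R. \<phi> x \<ge> 0) \<longrightarrow>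
              (LINT x:ball 0 R|lebesgue. Gv x \<bullet> G\<phi> x)
                \<le> lam * (LINT x:ball 0 R|lebesgue. gfun h \<sigma> (v x) * \<phi> x)) \<and>
           emeasure lebesgue {x\<in>ball 0 R. v x = psi h \<sigma>} > 0"
proof -
  note sig = assms(1) and hc = assms(2) and hp = assms(4) and g1 = assms(6) and g2 = assms(7)
    and lim = assms(9) and Rp = assms(10)
  obtain M where hM: "\<forall>t\<in>{0..<\<sigma>}. h t * (\<sigma> - t) powr \<gamma> \<le> M"
    using hM_exists[OF sig hc hp _ lim] g1 by auto
  define n where "n = nat \<lceil>2 / (2 - \<gamma>)\<rceil> + 3"
  have n3: "n \<ge> 3" by (simp add: n_def)
  have c1: "2 / (2 - \<gamma>) \<le> real (nat \<lceil>2 / (2 - \<gamma>)\<rceil>)" by (rule real_nat_ceiling_ge)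
  have c2: "real n = real (nat \<lceil>2 / (2 - \<gamma>)\<rceil>) + 3" by (simp add: n_def)
  have "2 / (2 - \<gamma>) \<le> real n" using c1 c2 by linarith
  then have "2 \<le> real n * (2 - \<gamma>)" using g2 by (simp add: field_simps)
  then have ngam: "real n * \<gamma> \<le> 2 * real n - 2" by (simp add: algebra_simps)
  define a where "a = R^2 / 4"
  have a0: "0 < a" using Rp by (simp add: a_def)
  have adR: "a + a < R^2" using Rp by (simp add: a_def)
  interpret P: profR h \<sigma> n a a \<gamma> M R
    by unfold_locales (use sig hc hp n3 a0 hM g1 ngam Rp adR in auto)
  show ?thesis
  proof (intro exI[of _ "P.Lam (real DIM('n))"] allI impI)
    fix lam assume lam: "P.Lam (real DIM('n)) \<le> lam"
    show "\<exists>(v :: 'n \<Rightarrow> real) Gv.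
           H10 (ball 0 R) v Gv \<and>
           (\<forall>x\<in>ball 0 R. 0 \<le> v x \<and> v x \<le> psi h \<sigma>) \<and>
           (\<forall>\<phi> G\<phi>. H10 (ball 0 R) \<phi> G\<phi> \<and> (\<forall>x\<in>ball 0 R. \<phi> x \<ge> 0) \<longrightarrow>
              (LINT x:ball 0 R|lebesgue. Gv x \<bullet> G\<phi> x)
                \<le> lam * (LINT x:ball 0 R|lebesgue. gfun h \<sigma> (v x) * \<phi> x)) \<and>
           emeasure lebesgue {x\<in>ball 0 R. v x = psi h \<sigma>} > 0"
    proof (intro exI[of _ P.v] exI[of _ P.Gv] conjI ballI allI impI)
      show "H10 (ball 0 R) (P.v :: 'n \<Rightarrow> real) P.Gv" by (rule P.H10_v)
      show "0 \<le> P.v x" "P.v x \<le> psi h \<sigma>" for x :: 'n by (rule P.v_range)+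
      show "(LINT x:ball 0 R|lebesgue. P.Gv x \<bullet> G\<phi> x) \<le> lam * (LINT x:ball 0 R|lebesgue. gfun h \<sigma> (P.v x) * \<phi> x)"
        if "H10 (ball 0 R) \<phi> G\<phi> \<and> (\<forall>x\<in>ball 0 R. \<phi> x \<ge> 0)" for \<phi> :: "'n \<Rightarrow> real" and G\<phi>
        using P.subsol[of \<phi> G\<phi> lam] that lam by blast
      show "emeasure lebesgue {x\<in>ball 0 R. (P.v :: 'n \<Rightarrow> real) x = psi h \<sigma>} > 0"
      proof -
        define B where "B = {x\<in>ball (0::'n) R. P.v x = psi h \<sigma>}"
        have sa: "sqrt a < R"
        proof -
          have "a < R^2" using adR a0 by linarith
          then have "sqrt a < sqrt (R^2)" by (simp only: real_sqrt_less_iff)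
          then show ?thesis using Rp by simp
        qed
        have sub: "ball (0::'n) (sqrt a) \<subseteq> B"
        proof
          fix x :: 'n assume x: "x \<in> ball 0 (sqrt a)"
          then have "norm x < sqrt a" by simp
          then have "(norm x)^2 < (sqrt a)^2" by (intro power_strict_mono) auto
          then have "(norm x)^2 < a" using a0 by simp
          then have "x \<bullet> x \<le> a" by (simp add: power2_norm_eq_inner)
          then show "x \<in> B" using P.v_in[of x] x sa unfolding B_def by auto
        qed
        have vc: "continuous_on UNIV (P.v :: 'n \<Rightarrow> real)" by (rule P.v_cont)
        have cl: "closed {x::'n. P.v x = psi h \<sigma>}"
          by (rule closed_Collect_eq[OF vc continuous_on_const])
        have Beq: "B = ball 0 R \<inter> {x::'n. P.v x = psi h \<sigma>}" by (auto simp: B_def)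
        have "B \<in> sets borel" unfolding Beq by (intro sets.Int borel_closed borel_open cl) auto
        then have Bs: "B \<in> sets lebesgue" by simp
        have "\<not> negligible (ball (0::'n) (sqrt a))" using a0 by (intro open_not_negligible) auto
        then have "emeasure lebesgue (ball (0::'n) (sqrt a)) \<noteq> 0"
          by (simp add: negligible_iff_null_sets null_sets_def)
        moreover have "emeasure lebesgue (ball (0::'n) (sqrt a)) \<le> emeasure lebesgue B"
          by (rule emeasure_mono[OF sub Bs])
        ultimately show ?thesis unfolding B_def by (metis not_gr_zero le_zero_eq)
      qed
    qed
  qed
qed


end
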